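(* Let $\mathcal A\subseteq E^\infty$, let $V\subseteq E$ be a block subspace, $\vec v$ a finite block sequence and $T$ a $(V,\vec v)$-rule, and suppose that for every block subspace $W\subseteq V$, player I has no strategy in $B^T_W(\vec v)$ to play in $\mathcal A$. Then there are a block subspace $X\subseteq V$ and an $(X,\vec v)$-rule $S\subseteq T$ such that $[S]\cap{\rm Int}(\mathcal A)=\emptyset$ and, for every block subspace $W\subseteq X$, player I has no strategy in $B^S_W(\vec v)$ to play in $\mathcal A$.
   Context: Fix a countable field $\mathfrak F$ and let $E$ be the countable-dimensional $\mathfrak F$-vector space with basis $(e_n)$. For non-zero $x=\sum a_ne_n$, ${\rm supp}\,x=\{n:a_n\neq0\}$. A block sequence is a sequence of non-zero vectors with $\max{\rm supp}\,x_n<\min{\rm supp}\,x_{n+1}$. "Subspace" means an infinite-dimensional block subspace of $E$. For a subspace $X$, $X[k]=\{x\in X\setminus\{0\}:k<\min{\rm supp}\,x\}$. $E^\infty=E^{\mathbb N}$ with the product of discrete topologies; ${\rm Int}$ denotes interior; $E^{<\infty}$ is the set of finite block sequences; $\hat{}$ is concatenation; $T_{\vec x}=\{\vec y:\vec x\,\hat{}\,\vec y\in T\}$; $[T]=\{(x_n)\in E^\infty:\text{for infinitely many } m,\ (x_0,\dots,x_m)\in T\}$. Game $B_V(\vec v)$: if $|\vec v|$ is even: II plays a subspace $Z_0\subseteq V$; I plays non-zero $x_0\in Z_0$ and $n_0\in\mathbb N$; II plays non-zero $y_0\in V[n_0]$ and a subspace $Z_1\subseteq V$; I plays $x_1\in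 Z_1$, $n_1$; II plays $y_1\in V[n_1]$, $Z_2$; etc.; outcome $\vec v\,\hat{}\,(x_0,y_0,x_1,y_1,\dots)$. If $|\vec v|$ is odd: I plays $n_0$; II plays $y_0\in V[n_0]$ and $Z_0\subseteq V$; I plays $x_0\in Z_0$ and $n_1$; II plays $y_1\in V[n_1]$ and $Z_1$; etc.; outcome $\vec v\,\hat{}\,(y_0,x_0,y_1,x_1,\dots)$. A $(V,\vec v)$-rule is a set $T\subseteq E^{<\infty}$ with $\vec v\in T$ such that: (i) if $\vec y\in T$, $|\vec y|$ odd, then for every subspace $Z\subseteq V$ there is $z\in Z$ with $\vec y\,\hat{}\,z\in T$; (ii) if $\vec y\in T$, $|\vec y|$ even, then there is $n$ with $\vec y\,\hat{}\,z\in T$ for all $z\in V[n]$. The $T$-induced subgame $B^T_V(\vec v)$ is played as $B_V(\vec v)$ with the additional requirement that every position, i.e. the finite sequence of vectors played so far listed in the order they appear in the outcome, belongs to $T_{\vec v}$. A strategy to play in $\mathcal A$ is one all of whose outcomes lie in $\mathcal A$. *)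

theory Defs
  imports Main "HOL-Library.Poly_Mapping" "HOL-Library.Countable"
begin

text \<open>E = finitely supported vectors over a field 'f with basis (e_n); a vector x is a
 poly_mapping nat =>0 'f, Poly_Mapping.lookup x n is the n-th coordinate, keys x = supp x.\<close>

type_synonym 'f vec = "nat \<Rightarrow>\<^sub>0 'f"

definition block_seq :: "(nat \<Rightarrow> 'f::zero vec) \<Rightarrow> bool" where
  "block_seq b \<longleftrightarrow> (\<forall>n. b n \<noteq> 0) \<and> (\<forall>n. Max (Poly_Mapping.keys (b n)) < Min (Poly_Mapping.keys (b (Suc n))))"

definition block_list :: "'f::zero vec list \<Rightarrow> bool" where
  "block_list xs \<longleftrightarrow> (\<forall>x\<in>set xs. x \<noteq> 0) \<and>
     (\<forall>i. Suc i < length xs \<longrightarrow> Max (Poly_Mapping.keys (xs ! i)) < Min (Poly_Mapping.keys (xs ! Suc i)))"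

definition span_seq :: "(nat \<Rightarrow> 'f::field vec) \<Rightarrow> 'f vec set" where
  "span_seq b = {x. \<exists>n c. \<forall>k. Poly_Mapping.lookup x k = (\<Sum>i<n. c i * Poly_Mapping.lookup (b i) k)}"

definition block_subspace :: "'f::field vec set \<Rightarrow> bool" where
  "block_subspace X \<longleftrightarrow> (\<exists>b. block_seq b \<and> X = span_seq b)"

definition tail :: "'f::zero vec set \<Rightarrow> nat \<Rightarrow> 'f vec set" where
  "tail X k = {x \<in> X. x \<noteq> 0 \<and> k < Min (Poly_Mapping.keys x)}"

definition is_rule :: "'f::field vec set \<Rightarrow> 'f vec list \<Rightarrow> 'f vec list set \<Rightarrow> bool" where
  "is_rule V v T \<longleftrightarrow> v \<in> T \<and> (\<forall>y\<in>T. block_list y) \<and>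
     (\<forall>y\<in>T. odd (length y) \<longrightarrow>
        (\<forall>Z. block_subspace Z \<and> Z \<subseteq> V \<longrightarrow> (\<exists>z\<in>Z. y @ [z] \<in> T))) \<and>
     (\<forall>y\<in>T. even (length y) \<longrightarrow> (\<exists>n. \<forall>z\<in>tail V n. y @ [z] \<in> T))"

definition body :: "'a list set \<Rightarrow> (nat \<Rightarrow> 'a) set" where
  "body T = {s. infinite {m. map s [0..<Suc m] \<in> T}}"

text \<open>Interior in E^infinity with the product of discrete topologies.\<close>
definition seq_interior :: "(nat \<Rightarrow> 'a) set \<Rightarrow> (nat \<Rightarrow> 'a) set" where
  "seq_interior A = {s. \<exists>m. \<forall>t. (\<forall>i<m. t i = s i) \<longrightarrow> t \<in> A}"

text \<open>The stream of moves after v: if |v| even it is x0,y0,x1,y1,...; if odd it is y0,x0,y1,x1,...\<close>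
definition game_stream :: "bool \<Rightarrow> (nat \<Rightarrow> 'a) \<Rightarrow> (nat \<Rightarrow> 'a) \<Rightarrow> nat \<Rightarrow> 'a" where
  "game_stream ev xs ys j =
     (if ev then (if even j then xs (j div 2) else ys (j div 2))
            else (if even j then ys (j div 2) else xs (j div 2)))"

definition outcome :: "'a list \<Rightarrow> (nat \<Rightarrow> 'a) \<Rightarrow> nat \<Rightarrow> 'a" where
  "outcome v w i = (if i < length v then v ! i else w (i - length v))"

text \<open>A strategy of player I is given by two functions of II's previous moves
 (the y's and the Z's played so far), producing I's vector move and integer move.
 |v| even: round k: II has played Z_0..Z_k and y_0..y_(k-1); I plays x_k, n_k.
 |v| odd:  I plays n_k after II played y_0..y_(k-1), Z_0..Z_(k-1);
           I plays x_k after II played y_0..y_k, Z_0..Z_k.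
 The strategy plays in A in the T-induced game B^T_W(v) if, whenever II has moved legally
 so far, I's prescribed move is legal, and every fully legal play has outcome in A.
 Positions (vectors played so far, in outcome order) must belong to T_v.\<close>
definition I_strategy_in ::
  "'f::field vec list set \<Rightarrow> 'f vec set \<Rightarrow> 'f vec list \<Rightarrow> (nat \<Rightarrow> 'f vec) set
   \<Rightarrow> ('f vec list \<Rightarrow> 'f vec set list \<Rightarrow> 'f vec)
   \<Rightarrow> ('f vec list \<Rightarrow> 'f vec set list \<Rightarrow> nat) \<Rightarrow> bool" where
  "I_strategy_in T W v A \<sigma>x \<sigma>n \<longleftrightarrow>
    (\<forall>(ys :: nat \<Rightarrow> 'f vec) (Zs :: nat \<Rightarrow> 'f vec set).
      (if even (length v) then
        (let xs = (\<lambda>k. \<sigma>x (map ys [0..<k]) (map Zs [0..<Suc k]));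
             ns = (\<lambda>k. \<sigma>n (map ys [0..<k]) (map Zs [0..<Suc k]));
             w = game_stream True xs ys;
             pos = (\<lambda>j. v @ map w [0..<j]);
             IIok = (\<lambda>k. block_subspace (Zs k) \<and> Zs k \<subseteq> W \<and>
                        (0 < k \<longrightarrow> ys (k - 1) \<in> tail W (ns (k - 1)) \<and> pos (2 * k) \<in> T));
             Iok = (\<lambda>k. xs k \<in> Zs k \<and> xs k \<noteq> 0 \<and> pos (2 * k + 1) \<in> T)
         in (\<forall>k. (\<forall>j\<le>k. IIok j) \<longrightarrow> Iok k) \<and> ((\<forall>k. IIok k) \<longrightarrow> outcome v w \<in> A))
      else
        (let xs = (\<lambda>k. \<sigma>x (map ys [0..<Suc k]) (map Zs [0..<Suc k]));
             ns = (\<lambda>k. \<sigma>n (map ys [0..<k]) (map Zs [0..<k]));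
             w = game_stream False xs ys;
             pos = (\<lambda>j. v @ map w [0..<j]);
             IIok = (\<lambda>k. ys k \<in> tail W (ns k) \<and> pos (2 * k + 1) \<in> T \<and>
                        block_subspace (Zs k) \<and> Zs k \<subseteq> W);
             Iok = (\<lambda>k. 0 < k \<longrightarrow> xs (k - 1) \<in> Zs (k - 1) \<and> xs (k - 1) \<noteq> 0 \<and> pos (2 * k) \<in> T)
         in (\<forall>k. (\<forall>j<k. IIok j) \<longrightarrow> Iok k) \<and> ((\<forall>k. IIok k) \<longrightarrow> outcome v w \<in> A))))"

definition I_has_strategy ::
  "'f::field vec list set \<Rightarrow> 'f vec set \<Rightarrow> 'f vec list \<Rightarrow> (nat \<Rightarrow> 'f vec) set \<Rightarrow> bool" where
  "I_has_strategy T W v A \<longleftrightarrow> (\<exists>\<sigma>x \<sigma>n. I_strategy_in T W v A \<sigma>x \<sigma>n)"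

end

theory Submission
  imports Defs "HOL-Library.Countable_Set"
begin

lemma span_closure:
  fixes b d :: "nat \<Rightarrow> 'f::field vec"
  assumes d: "\<forall>j<n. c j \<noteq> 0 \<longrightarrow> d j \<in> span_seq b"
    and x: "\<forall>k. Poly_Mapping.lookup x k = (\<Sum>j<n. c j * Poly_Mapping.lookup (d j) k)"
  shows "x \<in> span_seq b"
proof -
  have "\<forall>j. \<exists>N C. j < n \<and> c j \<noteq> 0 \<longrightarrow> (\<forall>k. Poly_Mapping.lookup (d j) k = (\<Sum>i<N. C i * Poly_Mapping.lookup (b i) k))"
    using d unfolding span_seq_def by blast
  then obtain N C where NC: "\<And>j k. j < n \<Longrightarrow> c j \<noteq> 0 \<Longrightarrow> Poly_Mapping.lookup (d j) k = (\<Sum>i<N j. C j i * Poly_Mapping.lookup (b i) k)"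
    by metis
  define M where "M = (\<Sum>j<n. N j)"
  have NM: "j < n \<Longrightarrow> N j \<le> M" for j
    unfolding M_def by (rule member_le_sum) auto
  define c' where "c' i = (\<Sum>j<n. c j * (if i < N j then C j i else 0))" for i
  have "Poly_Mapping.lookup x k = (\<Sum>i<M. c' i * Poly_Mapping.lookup (b i) k)" for k
  proof -
    have "(\<Sum>i<M. c' i * Poly_Mapping.lookup (b i) k)
        = (\<Sum>i<M. \<Sum>j<n. c j * ((if i < N j then C j i else 0) * Poly_Mapping.lookup (b i) k))"
      unfolding c'_def by (simp add: sum_distrib_right mult.assoc)
    also have "\<dots> = (\<Sum>j<n. \<Sum>i<M. c j * ((if i < N j then C j i else 0) * Poly_Mapping.lookup (b i) k))"
      by (rule sum.swap)
    also have "\<dots> = (\<Sum>j<n. c j * Poly_Mapping.lookup (d j) k)"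
    proof (rule sum.cong[OF refl])
      fix j assume j: "j \<in> {..<n}"
      show "(\<Sum>i<M. c j * ((if i < N j then C j i else 0) * Poly_Mapping.lookup (b i) k)) = c j * Poly_Mapping.lookup (d j) k"
      proof (cases "c j = 0")
        case True then show ?thesis by simp
      next
        case False
        have "(\<Sum>i<M. c j * ((if i < N j then C j i else 0) * Poly_Mapping.lookup (b i) k))
            = c j * (\<Sum>i<M. (if i < N j then C j i * Poly_Mapping.lookup (b i) k else 0))"
          by (subst sum_distrib_left) (rule sum.cong, auto)
        also have "(\<Sum>i<M. (if i < N j then C j i * Poly_Mapping.lookup (b i) k else 0)) = (\<Sum>i\<in>{..<M} \<inter> {i. i < N j}. C j i * Poly_Mapping.lookup (b i) k)"
          by (simp add: sum.inter_restrict)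
        also have "{..<M} \<inter> {i. i < N j} = {..<N j}" using NM[of j] j by auto
        also have "(\<Sum>i<N j. C j i * Poly_Mapping.lookup (b i) k) = Poly_Mapping.lookup (d j) k"
          using NC[of j k] j False by simp
        finally show ?thesis .
      qed
    qed
    finally show ?thesis using x by simp
  qed
  then show ?thesis unfolding span_seq_def by blast
qed

lemma keys_ne: "(x::'f::zero vec) \<noteq> 0 \<Longrightarrow> Poly_Mapping.keys x \<noteq> {}"
  by simp

lemma min_le_max_keys: "(x::'f::zero vec) \<noteq> 0 \<Longrightarrow> Min (Poly_Mapping.keys x) \<le> Max (Poly_Mapping.keys x)"
proof -
  assume "x \<noteq> 0"
  then have "Min (Poly_Mapping.keys x) \<in> Poly_Mapping.keys x" by (simp add: Min_in)
  then show ?thesis by simp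
qed

lemma key_ge_min: "k \<in> Poly_Mapping.keys (x::'f::zero vec) \<Longrightarrow> Min (Poly_Mapping.keys x) \<le> k"
  by simp

lemma key_le_max: "k \<in> Poly_Mapping.keys (x::'f::zero vec) \<Longrightarrow> k \<le> Max (Poly_Mapping.keys x)"
  by simp

lemma block_seq_lt:
  assumes "block_seq b" "i < j"
  shows "Max (Poly_Mapping.keys (b i)) < Min (Poly_Mapping.keys (b j))"
  using assms(2)
proof (induction j)
  case 0 then show ?case by simp
next
  case (Suc j)
  have bs: "\<forall>n. b n \<noteq> 0" "\<forall>n. Max (Poly_Mapping.keys (b n)) < Min (Poly_Mapping.keys (b (Suc n)))"
    using assms(1) unfolding block_seq_def by auto
  show ?case
  proof (cases "i = j")
    case True then show ?thesis using bs by simp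
  next
    case False
    then have "i < j" using Suc by simp
    then have "Max (Poly_Mapping.keys (b i)) < Min (Poly_Mapping.keys (b j))" using Suc by simp
    also have "\<dots> \<le> Max (Poly_Mapping.keys (b j))" using bs min_le_max_keys by blast
    also have "\<dots> < Min (Poly_Mapping.keys (b (Suc j)))" using bs by simp
    finally show ?thesis .
  qed
qed

lemma block_seq_min_mono:
  assumes "block_seq b" "i \<le> j"
  shows "Min (Poly_Mapping.keys (b i)) \<le> Min (Poly_Mapping.keys (b j))"
proof (cases "i = j")
  case False
  then have "i < j" using assms by simp
  have "b i \<noteq> 0" using assms(1) unfolding block_seq_def by auto
  then show ?thesis using block_seq_lt[OF assms(1) \<open>i<j\<close>] min_le_max_keys[of "b i"] by linarith
qed simp

lemma block_seq_min_ge: "block_seq b \<Longrightarrow> n \<le> Min (Poly_Mapping.keys (b n))"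
proof (induction n)
  case (Suc n)
  have "b n \<noteq> 0" using Suc.prems unfolding block_seq_def by auto
  then have "Min (Poly_Mapping.keys (b n)) \<le> Max (Poly_Mapping.keys (b n))" by (rule min_le_max_keys)
  also have "\<dots> < Min (Poly_Mapping.keys (b (Suc n)))" using Suc.prems unfolding block_seq_def by auto
  finally show ?case using Suc by simp
qed simp

lemma block_seq_disj:
  assumes "block_seq b" "k \<in> Poly_Mapping.keys (b j)" "l \<noteq> j"
  shows "Poly_Mapping.lookup (b l) k = 0"
proof (rule ccontr)
  assume "Poly_Mapping.lookup (b l) k \<noteq> 0"
  then have kl: "k \<in> Poly_Mapping.keys (b l)" by (simp add: in_keys_iff)
  show False
  proof (cases "l < j")
    case True
    have "k \<le> Max (Poly_Mapping.keys (b l))" using kl by simp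
    also have "\<dots> < Min (Poly_Mapping.keys (b j))" using block_seq_lt[OF assms(1) True] .
    also have "\<dots> \<le> k" using assms(2) by simp
    finally show False by simp
  next
    case False
    then have "j < l" using assms(3) by simp
    have "k \<le> Max (Poly_Mapping.keys (b j))" using assms(2) by simp
    also have "\<dots> < Min (Poly_Mapping.keys (b l))" using block_seq_lt[OF assms(1) \<open>j<l\<close>] .
    also have "\<dots> \<le> k" using kl by simp
    finally show False by simp
  qed
qed

lemma span_lookup_key:
  fixes b :: "nat \<Rightarrow> 'f::field vec"
  assumes "block_seq b" "k \<in> Poly_Mapping.keys (b j)"
    and "\<forall>k. Poly_Mapping.lookup x k = (\<Sum>i<n. c i * Poly_Mapping.lookup (b i) k)"
  shows "Poly_Mapping.lookup x k = (if j < n then c j * Poly_Mapping.lookup (b j) k else 0)"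
proof -
  have "Poly_Mapping.lookup x k = (\<Sum>i<n. c i * Poly_Mapping.lookup (b i) k)" using assms(3) by simp
  also have "\<dots> = (\<Sum>i<n. if i = j then c j * Poly_Mapping.lookup (b j) k else 0)"
    by (rule sum.cong[OF refl]) (use block_seq_disj[OF assms(1,2)] in auto)
  also have "\<dots> = (if j < n then c j * Poly_Mapping.lookup (b j) k else 0)"
    by (simp add: sum.delta)
  finally show ?thesis .
qed

lemma span_zero: "0 \<in> span_seq b"
  unfolding span_seq_def by (rule CollectI, rule exI[of _ 0]) simp

lemma span_gen: "b i \<in> span_seq (b::nat \<Rightarrow> 'f::field vec)"
  unfolding span_seq_def
  by (rule CollectI, rule exI[of _ "Suc i"], rule exI[of _ "\<lambda>j. if j = i then 1 else 0"])
     (simp add: if_distrib sum.delta cong: if_cong)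

lemma block_subspace_zero: "block_subspace X \<Longrightarrow> 0 \<in> X"
  unfolding block_subspace_def using span_zero by blast

lemma keys_span_elem:
  fixes b :: "nat \<Rightarrow> 'f::field vec"
  assumes "\<forall>k. Poly_Mapping.lookup x k = (\<Sum>i<n. c i * Poly_Mapping.lookup (b i) k)"
    and "k \<in> Poly_Mapping.keys x"
  shows "\<exists>i<n. k \<in> Poly_Mapping.keys (b i)"
proof (rule ccontr)
  assume "\<not> ?thesis"
  then have "\<forall>i<n. Poly_Mapping.lookup (b i) k = 0" by (simp add: in_keys_iff)
  then have "(\<Sum>i<n. c i * Poly_Mapping.lookup (b i) k) = 0" by (intro sum.neutral) auto
  then have "Poly_Mapping.lookup x k = 0" using assms(1) by simp
  then show False using assms(2) by (simp add: in_keys_iff)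
qed

lemma BS1:
  fixes Z :: "'f::field vec set"
  assumes "block_subspace Z"
  shows "\<exists>Z'. block_subspace Z' \<and> Z' \<subseteq> Z \<and> (\<forall>x\<in>Z'. x \<noteq> 0 \<longrightarrow> M < Min (Poly_Mapping.keys x))"
proof -
  obtain b where b: "block_seq b" "Z = span_seq b" using assms unfolding block_subspace_def by blast
  define b' where "b' i = b (i + Suc M)" for i
  have bs': "block_seq b'" using b(1) unfolding block_seq_def b'_def by simp
  have sub: "span_seq b' \<subseteq> Z"
  proof
    fix x assume "x \<in> span_seq b'"
    then obtain n c where x: "\<forall>k. Poly_Mapping.lookup x k = (\<Sum>i<n. c i * Poly_Mapping.lookup (b' i) k)"
      unfolding span_seq_def by blast
    show "x \<in> Z" unfolding b(2)
      by (rule span_closure[OF _ x]) (simp add: b'_def span_gen)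
  qed
  have big: "M < Min (Poly_Mapping.keys x)" if xin: "x \<in> span_seq b'" and xnz: "x \<noteq> 0" for x
  proof -
    obtain n c where x: "\<forall>k. Poly_Mapping.lookup x k = (\<Sum>i<n. c i * Poly_Mapping.lookup (b' i) k)"
      using xin unfolding span_seq_def by blast
    have "Min (Poly_Mapping.keys x) \<in> Poly_Mapping.keys x" using xnz by (simp add: Min_in)
    then obtain i where "Min (Poly_Mapping.keys x) \<in> Poly_Mapping.keys (b' i)"
      using keys_span_elem[OF x] by blast
    then have ki: "Min (Poly_Mapping.keys x) \<in> Poly_Mapping.keys (b (i + Suc M))" unfolding b'_def by blast
    have "M < i + Suc M" by simp
    also have "\<dots> \<le> Min (Poly_Mapping.keys (b (i + Suc M)))" by (rule block_seq_min_ge[OF b(1)])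
    also have "\<dots> \<le> Min (Poly_Mapping.keys x)" using ki by simp
    finally show ?thesis .
  qed
  show ?thesis
    by (rule exI[of _ "span_seq b'"]) (use bs' sub big in \<open>auto simp: block_subspace_def\<close>)
qed

lemma BS2:
  fixes Z :: "'f::field vec set"
  assumes "block_subspace Z"
  shows "\<exists>x\<in>Z. x \<noteq> 0 \<and> M < Min (Poly_Mapping.keys x)"
proof -
  obtain Z' where Z': "block_subspace Z'" "Z' \<subseteq> Z" "\<forall>x\<in>Z'. x \<noteq> 0 \<longrightarrow> M < Min (Poly_Mapping.keys x)"
    using BS1[OF assms] by blast
  obtain b where "block_seq b" "Z' = span_seq b" using Z'(1) unfolding block_subspace_def by blast
  then have "b 0 \<in> Z'" "b 0 \<noteq> 0" using span_gen unfolding block_seq_def by auto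
  then show ?thesis using Z' by blast
qed

lemma in_span_block_subspace:
  fixes X :: "'f::field vec set" and n :: nat
  assumes "block_subspace X" "\<forall>j<n. c j \<noteq> 0 \<longrightarrow> d j \<in> X"
    and "\<forall>k. Poly_Mapping.lookup x k = (\<Sum>j<n. c j * Poly_Mapping.lookup (d j) k)"
  shows "x \<in> X"
proof -
  obtain b where "block_seq b" "X = span_seq b" using assms(1) unfolding block_subspace_def by blast
  then show ?thesis using span_closure[of n c d b x] assms(2,3) by simp
qed

lemma max_keys_mono:
  assumes "block_seq d" "j \<le> i"
  shows "Max (Poly_Mapping.keys (d j)) \<le> Max (Poly_Mapping.keys (d i))"
proof (cases "j = i")
  case False
  then have "j < i" using assms by simp
  have "d i \<noteq> 0" using assms(1) unfolding block_seq_def by auto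
  then show ?thesis using block_seq_lt[OF assms(1) \<open>j<i\<close>] min_le_max_keys[of "d i"] by linarith
qed simp

lemma fusion:
  fixes X0 :: "'f::field vec set" and Q :: "nat \<Rightarrow> 'f vec set \<Rightarrow> bool"
  assumes X0: "block_subspace X0"
    and ex: "\<And>i Y. block_subspace Y \<Longrightarrow> \<exists>Y'. block_subspace Y' \<and> Y' \<subseteq> Y \<and> Q i Y'"
    and cl: "\<And>i Y Z M. Q i Y \<Longrightarrow> block_subspace Y \<Longrightarrow> block_subspace Z \<Longrightarrow> tail Z M \<subseteq> Y \<Longrightarrow> Q i Z"
  shows "\<exists>X. block_subspace X \<and> X \<subseteq> X0 \<and> (\<forall>i. Q i X)"
proof -
  define Xs where "Xs = rec_nat X0 (\<lambda>i Y. SOME Y'. block_subspace Y' \<and> Y' \<subseteq> Y \<and> Q i Y')"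
  have Xs0: "Xs 0 = X0" unfolding Xs_def by simp
  have XsS: "Xs (Suc i) = (SOME Y'. block_subspace Y' \<and> Y' \<subseteq> Xs i \<and> Q i Y')" for i
    unfolding Xs_def by simp
  have bsX: "block_subspace (Xs i)" for i
  proof (induction i)
    case 0 then show ?case using X0 Xs0 by simp
  next
    case (Suc i) then show ?case unfolding XsS using someI_ex[OF ex[OF Suc]] by blast
  qed
  have XsP: "block_subspace (Xs (Suc i)) \<and> Xs (Suc i) \<subseteq> Xs i \<and> Q i (Xs (Suc i))" for i
    unfolding XsS using someI_ex[OF ex[OF bsX[of i]]] by blast
  have anti: "i \<le> j \<Longrightarrow> Xs j \<subseteq> Xs i" for i j
  proof (induction j)
    case 0 then show ?case by simp
  next
    case (Suc j) then show ?case using XsP[of j] by (cases "i = Suc j") auto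
  qed
  define d where "d = rec_nat (SOME x. x \<in> Xs 0 \<and> x \<noteq> 0)
     (\<lambda>i x. SOME y. y \<in> Xs (Suc i) \<and> y \<noteq> 0 \<and> Max (Poly_Mapping.keys x) < Min (Poly_Mapping.keys y))"
  have d0eq: "d 0 = (SOME x. x \<in> Xs 0 \<and> x \<noteq> 0)" unfolding d_def by simp
  have dSeq: "d (Suc i) = (SOME y. y \<in> Xs (Suc i) \<and> y \<noteq> 0 \<and> Max (Poly_Mapping.keys (d i)) < Min (Poly_Mapping.keys y))" for i
    unfolding d_def by simp
  have d0: "d 0 \<in> Xs 0 \<and> d 0 \<noteq> 0"
  proof -
    have "\<exists>x. x \<in> Xs 0 \<and> x \<noteq> 0" using BS2[OF bsX[of 0], of 0] by blast
    then show ?thesis unfolding d0eq by (rule someI_ex)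
  qed
  have dS: "d (Suc i) \<in> Xs (Suc i) \<and> d (Suc i) \<noteq> 0 \<and> Max (Poly_Mapping.keys (d i)) < Min (Poly_Mapping.keys (d (Suc i)))" for i
  proof -
    have "\<exists>y. y \<in> Xs (Suc i) \<and> y \<noteq> 0 \<and> Max (Poly_Mapping.keys (d i)) < Min (Poly_Mapping.keys y)"
      using BS2[OF bsX[of "Suc i"], of "Max (Poly_Mapping.keys (d i))"] by blast
    then show ?thesis unfolding dSeq[of i] by (rule someI_ex)
  qed
  have din: "d i \<in> Xs i" and dnz: "d i \<noteq> 0" for i
    using d0 dS by (cases i; simp)+
  have bsd: "block_seq d" unfolding block_seq_def using dnz dS by blast
  define X where "X = span_seq d"
  have bsXX: "block_subspace X" unfolding X_def block_subspace_def using bsd by blast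
  have sub0: "X \<subseteq> X0"
  proof
    fix x assume "x \<in> X"
    then obtain n c where x: "\<forall>k. Poly_Mapping.lookup x k = (\<Sum>j<n. c j * Poly_Mapping.lookup (d j) k)"
      unfolding X_def span_seq_def by blast
    show "x \<in> X0" using in_span_block_subspace[OF X0 _ x] din anti[of 0] Xs0 by blast
  qed
  have tl: "tail X (Max (Poly_Mapping.keys (d i))) \<subseteq> Xs (Suc i)" for i
  proof
    fix x assume xt: "x \<in> tail X (Max (Poly_Mapping.keys (d i)))"
    then have xX: "x \<in> X" and xnz: "x \<noteq> 0" and xmin: "Max (Poly_Mapping.keys (d i)) < Min (Poly_Mapping.keys x)"
      unfolding tail_def by auto
    obtain n c where x: "\<forall>k. Poly_Mapping.lookup x k = (\<Sum>j<n. c j * Poly_Mapping.lookup (d j) k)"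
      using xX unfolding X_def span_seq_def by blast
    have "d j \<in> Xs (Suc i)" if "j < n" "c j \<noteq> 0" for j
    proof (cases "i < j")
      case True then show ?thesis using din anti[of "Suc i" j] by auto
    next
      case False
      define k0 where "k0 = Min (Poly_Mapping.keys (d j))"
      have k0: "k0 \<in> Poly_Mapping.keys (d j)" unfolding k0_def using dnz[of j] by (simp add: Min_in)
      have lk: "Poly_Mapping.lookup x k0 = c j * Poly_Mapping.lookup (d j) k0"
        using span_lookup_key[OF bsd k0 x] that by simp
      have "k0 \<le> Max (Poly_Mapping.keys (d j))" using k0 by simp
      also have "\<dots> \<le> Max (Poly_Mapping.keys (d i))" using max_keys_mono[OF bsd] False by simp
      also have "\<dots> < Min (Poly_Mapping.keys x)" by (rule xmin)
      finally have "k0 \<notin> Poly_Mapping.keys x" using key_ge_min[of k0 x] by linarith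
      then have "Poly_Mapping.lookup x k0 = 0" by (simp add: in_keys_iff)
      moreover have "Poly_Mapping.lookup (d j) k0 \<noteq> 0" using k0 by (simp add: in_keys_iff)
      ultimately have "c j = 0" using lk by simp
      then show ?thesis using that by simp
    qed
    then show "x \<in> Xs (Suc i)" using in_span_block_subspace[OF bsX[of "Suc i"] _ x] by blast
  qed
  have "Q i X" for i
    using cl[of i "Xs (Suc i)" X] XsP[of i] bsXX tl[of i] by blast
  then show ?thesis using bsXX sub0 by blast
qed

definition ext :: "'a list \<Rightarrow> 'a list \<Rightarrow> bool" where
  "ext v q \<longleftrightarrow> (\<exists>r. q = v @ r)"

definition qs :: "'f::field vec list set \<Rightarrow> 'f vec set \<Rightarrow> (nat \<Rightarrow> 'f vec) set \<Rightarrow> 'f vec list \<Rightarrow> 'f vec list set \<Rightarrow> bool" where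
  "qs T W A p P \<longleftrightarrow> p \<in> P \<and> (\<forall>q\<in>P. q \<in> T \<and> ext p q) \<and>
    (\<forall>q\<in>P. even (length q) \<longrightarrow> (\<forall>Z. block_subspace Z \<and> Z \<subseteq> W \<longrightarrow> (\<exists>x\<in>Z. x \<noteq> 0 \<and> q @ [x] \<in> P))) \<and>
    (\<forall>q\<in>P. odd (length q) \<longrightarrow> (\<exists>n. \<forall>y\<in>tail W n. q @ [y] \<in> T \<longrightarrow> q @ [y] \<in> P)) \<and>
    (\<forall>s. (\<exists>N. \<forall>m\<ge>N. map s [0..<m] \<in> P) \<longrightarrow> s \<in> A)"

definition posacc :: "'f::field vec list set \<Rightarrow> 'f vec set \<Rightarrow> (nat \<Rightarrow> 'f vec) set \<Rightarrow> 'f vec list \<Rightarrow> bool" where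
  "posacc T W A p \<longleftrightarrow> (\<exists>P. qs T W A p P)"

lemma qs_root: "qs T W A p P \<Longrightarrow> p \<in> P"
  unfolding qs_def by blast
lemma qs_T: "qs T W A p P \<Longrightarrow> q \<in> P \<Longrightarrow> q \<in> T"
  unfolding qs_def by blast
lemma qs_ext: "qs T W A p P \<Longrightarrow> q \<in> P \<Longrightarrow> ext p q"
  unfolding qs_def by blast
lemma qs_even: "qs T W A p P \<Longrightarrow> q \<in> P \<Longrightarrow> even (length q) \<Longrightarrow> block_subspace Z \<Longrightarrow> Z \<subseteq> W \<Longrightarrow> \<exists>x\<in>Z. x \<noteq> 0 \<and> q @ [x] \<in> P"
  unfolding qs_def by blast
lemma qs_odd: "qs T W A p P \<Longrightarrow> q \<in> P \<Longrightarrow> odd (length q) \<Longrightarrow> \<exists>n. \<forall>y\<in>tail W n. q @ [y] \<in> T \<longrightarrow> q @ [y] \<in> P"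
  unfolding qs_def by blast
lemma qs_win: "qs T W A p P \<Longrightarrow> \<forall>m\<ge>N. map s [0..<m] \<in> P \<Longrightarrow> s \<in> A"
  unfolding qs_def by blast

lemma qsI:
  assumes "p \<in> P" "\<And>q. q \<in> P \<Longrightarrow> q \<in> T \<and> ext p q"
    "\<And>q Z. q \<in> P \<Longrightarrow> even (length q) \<Longrightarrow> block_subspace Z \<Longrightarrow> Z \<subseteq> W \<Longrightarrow> \<exists>x\<in>Z. x \<noteq> 0 \<and> q @ [x] \<in> P"
    "\<And>q. q \<in> P \<Longrightarrow> odd (length q) \<Longrightarrow> \<exists>n. \<forall>y\<in>tail W n. q @ [y] \<in> T \<longrightarrow> q @ [y] \<in> P"
    "\<And>s N. \<forall>m\<ge>N. map s [0..<m] \<in> P \<Longrightarrow> s \<in> A"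
  shows "qs T W A p P"
  unfolding qs_def
  apply (intro conjI)
  using assms(1) apply simp
  using assms(2) apply blast
  using assms(3) apply blast
  using assms(4) apply blast
  using assms(5) apply blast
  done

lemma ext_trans: "ext a b \<Longrightarrow> ext b c \<Longrightarrow> ext a c"
  unfolding ext_def by auto

lemma ext_refl: "ext a a"
  unfolding ext_def by auto

lemma ext_len: "ext a b \<Longrightarrow> length a \<le> length b"
  unfolding ext_def by auto

lemma ext_snoc: "ext a (a @ [x])"
  unfolding ext_def by auto

lemma ext_snocD: "ext (a @ [x]) c \<Longrightarrow> ext a c"
  unfolding ext_def by auto

lemma ext_snocI: "ext a c \<Longrightarrow> ext a (c @ [x])"
  unfolding ext_def by auto

lemma tail_mono: "W' \<subseteq> W \<Longrightarrow> tail W' n \<subseteq> tail W n"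
  unfolding tail_def by auto

lemma qs_mono:
  assumes "qs T W A p P" "W' \<subseteq> W"
  shows "qs T W' A p P"
proof -
  have t: "tail W' n \<subseteq> tail W n" for n using tail_mono[OF assms(2)] .
  have 1: "\<forall>q\<in>P. even (length q) \<longrightarrow> (\<forall>Z. block_subspace Z \<and> Z \<subseteq> W' \<longrightarrow> (\<exists>x\<in>Z. x \<noteq> 0 \<and> q @ [x] \<in> P))"
    using assms unfolding qs_def by blast
  have 2: "\<forall>q\<in>P. odd (length q) \<longrightarrow> (\<exists>n. \<forall>y\<in>tail W' n. q @ [y] \<in> T \<longrightarrow> q @ [y] \<in> P)"
  proof (intro ballI impI)
    fix q assume "q \<in> P" "odd (length q)"
    then obtain n where "\<forall>y\<in>tail W n. q @ [y] \<in> T \<longrightarrow> q @ [y] \<in> P" using assms(1) unfolding qs_def by blast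
    then show "\<exists>n. \<forall>y\<in>tail W' n. q @ [y] \<in> T \<longrightarrow> q @ [y] \<in> P" using t by blast
  qed
  show ?thesis using assms(1) 1 2 unfolding qs_def by blast
qed

lemma posacc_mono: "posacc T W A p \<Longrightarrow> W' \<subseteq> W \<Longrightarrow> posacc T W' A p"
  unfolding posacc_def using qs_mono by blast

lemma qs_tail:
  fixes Y :: "'f::field vec set"
  assumes "qs T Y A p P" "block_subspace Y" "tail Z M \<subseteq> Y"
  shows "qs T Z A p P"
proof -
  have ev: "\<exists>x\<in>Z'. x \<noteq> 0 \<and> q @ [x] \<in> P" if h: "q \<in> P" "even (length q)" "block_subspace Z'" "Z' \<subseteq> Z" for q Z'
  proof -
    obtain Z'' where Z'': "block_subspace Z''" "Z'' \<subseteq> Z'" "\<forall>x\<in>Z''. x \<noteq> 0 \<longrightarrow> M < Min (Poly_Mapping.keys x)"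
      using BS1[OF h(3)] by blast
    have "Z'' \<subseteq> Y"
    proof
      fix x assume x: "x \<in> Z''"
      show "x \<in> Y"
      proof (cases "x = 0")
        case True then show ?thesis using block_subspace_zero[OF assms(2)] by simp
      next
        case False
        then have "x \<in> tail Z M" using x Z'' h(4) unfolding tail_def by auto
        then show ?thesis using assms(3) by blast
      qed
    qed
    then obtain x where "x \<in> Z''" "x \<noteq> 0" "q @ [x] \<in> P"
      using assms(1) h(1,2) Z''(1) unfolding qs_def by blast
    then show ?thesis using Z''(2) by blast
  qed
  have od: "\<exists>n. \<forall>y\<in>tail Z n. q @ [y] \<in> T \<longrightarrow> q @ [y] \<in> P" if h: "q \<in> P" "odd (length q)" for q
  proof -
    obtain n where n: "\<forall>y\<in>tail Y n. q @ [y] \<in> T \<longrightarrow> q @ [y] \<in> P"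
      using assms(1) h unfolding qs_def by blast
    have "tail Z (max n M) \<subseteq> tail Y n"
    proof
      fix y assume y: "y \<in> tail Z (max n M)"
      then have "y \<in> tail Z M" unfolding tail_def by auto
      then have "y \<in> Y" using assms(3) by blast
      then show "y \<in> tail Y n" using y unfolding tail_def by auto
    qed
    then show ?thesis using n by blast
  qed
  show ?thesis using assms(1) ev od unfolding qs_def by blast
qed

lemma posacc_tail:
  fixes Y :: "'f::field vec set"
  assumes "posacc T Y A p" "block_subspace Y" "tail Z M \<subseteq> Y"
  shows "posacc T Z A p"
  using qs_tail assms unfolding posacc_def by blast

lemma map_upt_ext:
  assumes "ext (map s [0..<a]) q" "length q \<le> b" "ext r (map s [0..<b])"
  shows "ext r q \<or> True"
  by simp

lemma ext_map_prefix:
  assumes "ext q (map s [0..<m])" "i < length q"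
  shows "s i = q ! i"
proof -
  obtain r where r: "map s [0..<m] = q @ r" using assms(1) unfolding ext_def by blast
  have "i < m" using assms(2) r by (metis length_append length_map length_upt minus_nat.diff_0 trans_less_add1)
  then have "map s [0..<m] ! i = s i" by simp
  then show ?thesis using r assms(2) by (simp add: nth_append)
qed

lemma qs_union:
  fixes p :: "'f::field vec list"
  assumes pT: "p \<in> T"
    and F: "\<And>x. x\<in>G \<Longrightarrow> qs T W A (p @ [x]) (F x)"
    and rev: "even (length p) \<Longrightarrow> (\<forall>Z. block_subspace Z \<and> Z \<subseteq> W \<longrightarrow> (\<exists>x\<in>Z. x \<noteq> 0 \<and> x \<in> G))"
    and rod: "odd (length p) \<Longrightarrow> (\<exists>n. \<forall>y\<in>tail W n. p @ [y] \<in> T \<longrightarrow> y \<in> G)"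
  shows "qs T W A p (insert p (\<Union>x\<in>G. F x))"
proof -
  let ?P = "insert p (\<Union>x\<in>G. F x)"
  have memF: "x \<in> G \<Longrightarrow> p @ [x] \<in> F x" for x using qs_root[OF F] .
  have elt: "q \<in> T \<and> ext p q" if qP: "q \<in> ?P" for q
  proof (cases "q = p")
    case True then show ?thesis using pT ext_refl by simp
  next
    case False
    then obtain x where x: "x \<in> G" "q \<in> F x" using qP by blast
    have "q \<in> T" using qs_T[OF F[OF x(1)] x(2)] .
    moreover have "ext (p @ [x]) q" using qs_ext[OF F[OF x(1)] x(2)] .
    then have "ext p q" by (rule ext_snocD)
    ultimately show ?thesis by simp
  qed
  have ev: "\<exists>x\<in>Z. x \<noteq> 0 \<and> q @ [x] \<in> ?P" if q: "q \<in> ?P" "even (length q)" and Z: "block_subspace Z" "Z \<subseteq> W" for q Z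
  proof (cases "q = p")
    case True
    then obtain x where "x \<in> Z" "x \<noteq> 0" "x \<in> G" using rev q(2) Z by blast
    then show ?thesis using memF True by blast
  next
    case False
    then obtain x where x: "x \<in> G" "q \<in> F x" using q by blast
    obtain y where "y \<in> Z" "y \<noteq> 0" "q @ [y] \<in> F x" using qs_even[OF F[OF x(1)] x(2) q(2) Z] by blast
    then show ?thesis using x(1) by blast
  qed
  have od: "\<exists>n. \<forall>y\<in>tail W n. q @ [y] \<in> T \<longrightarrow> q @ [y] \<in> ?P" if q: "q \<in> ?P" "odd (length q)" for q
  proof (cases "q = p")
    case True
    then obtain n where "\<forall>y\<in>tail W n. p @ [y] \<in> T \<longrightarrow> y \<in> G" using rod q(2) by blast
    then show ?thesis using memF True by blast
  next
    case False
    then obtain x where x: "x \<in> G" "q \<in> F x" using q by blast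
    obtain n where "\<forall>y\<in>tail W n. q @ [y] \<in> T \<longrightarrow> q @ [y] \<in> F x"
      using qs_odd[OF F[OF x(1)] x(2) q(2)] by blast
    then show ?thesis using x(1) by blast
  qed
  have win: "s \<in> A" if N: "\<forall>m\<ge>N. map s [0..<m] \<in> ?P" for s N
  proof -
    define N' where "N' = max N (Suc (length p))"
    have inF: "\<exists>x\<in>G. map s [0..<m] \<in> F x" if "m \<ge> N'" for m
    proof -
      have "map s [0..<m] \<in> ?P" using N that unfolding N'_def by simp
      moreover have "length (map s [0..<m]) \<noteq> length p" using that unfolding N'_def by simp
      then have "map s [0..<m] \<noteq> p" by metis
      ultimately show ?thesis by blast
    qed
    have xs: "x = s (length p)" if "x \<in> G" "map s [0..<m] \<in> F x" for x m
    proof -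
      have "ext (p @ [x]) (map s [0..<m])" using qs_ext[OF F[OF that(1)] that(2)] .
      then have "s (length p) = (p @ [x]) ! length p" by (rule ext_map_prefix) simp
      then show ?thesis by simp
    qed
    obtain x0 where x0: "x0 \<in> G" "map s [0..<N'] \<in> F x0" using inF by blast
    have "\<forall>m\<ge>N'. map s [0..<m] \<in> F x0"
    proof (intro allI impI)
      fix m assume "N' \<le> m"
      then obtain x where "x \<in> G" "map s [0..<m] \<in> F x" using inF by blast
      moreover have "x = x0" using xs[OF calculation] xs[OF x0] by simp
      ultimately show "map s [0..<m] \<in> F x0" by simp
    qed
    then show ?thesis using qs_win[OF F[OF x0(1)]] by blast
  qed
  show ?thesis by (rule qsI[OF _ elt ev od win]) simp_all
qed

lemma posacc_even:
  fixes p :: "'f::field vec list"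
  assumes "even (length p)" "p \<in> T"
    and "\<forall>Z. block_subspace Z \<and> Z \<subseteq> W \<longrightarrow> (\<exists>x\<in>Z. x \<noteq> 0 \<and> posacc T W A (p @ [x]))"
  shows "posacc T W A p"
proof -
  let ?G = "{x. posacc T W A (p @ [x])}"
  let ?F = "\<lambda>x. SOME P. qs T W A (p @ [x]) P"
  have F: "qs T W A (p @ [x]) (?F x)" if "x \<in> ?G" for x using that unfolding posacc_def by (auto intro: someI_ex)
  have "qs T W A p (insert p (\<Union>x\<in>?G. ?F x))"
  proof (rule qs_union[of p T ?G W A ?F, OF assms(2) F])
    show "\<forall>Z. block_subspace Z \<and> Z \<subseteq> W \<longrightarrow> (\<exists>x\<in>Z. x \<noteq> 0 \<and> x \<in> ?G)" using assms(3) by simp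
    show "odd (length p) \<Longrightarrow> \<exists>n. \<forall>y\<in>tail W n. p @ [y] \<in> T \<longrightarrow> y \<in> ?G" using assms(1) by simp
  qed simp_all
  then show ?thesis unfolding posacc_def by blast
qed

lemma posacc_odd:
  fixes p :: "'f::field vec list"
  assumes "odd (length p)" "p \<in> T"
    and "\<forall>y\<in>tail W n. p @ [y] \<in> T \<longrightarrow> posacc T W A (p @ [y])"
  shows "posacc T W A p"
proof -
  let ?G = "{x. posacc T W A (p @ [x])}"
  let ?F = "\<lambda>x. SOME P. qs T W A (p @ [x]) P"
  have F: "qs T W A (p @ [x]) (?F x)" if "x \<in> ?G" for x using that unfolding posacc_def by (auto intro: someI_ex)
  have "qs T W A p (insert p (\<Union>x\<in>?G. ?F x))"
  proof (rule qs_union[of p T ?G W A ?F, OF assms(2) F])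
    show "\<exists>n. \<forall>y\<in>tail W n. p @ [y] \<in> T \<longrightarrow> y \<in> ?G" using assms(3) by blast
    show "even (length p) \<Longrightarrow> \<forall>Z. block_subspace Z \<and> Z \<subseteq> W \<longrightarrow> (\<exists>x\<in>Z. x \<noteq> 0 \<and> x \<in> ?G)" using assms(1) by simp
  qed simp_all
  then show ?thesis unfolding posacc_def by blast
qed


lemma posacc_trivial:
  fixes p :: "'f::field vec list"
  assumes rule: "is_rule V v T" and WV: "W \<subseteq> V" and pT: "p \<in> T"
    and A: "\<forall>s. map s [0..<length p] = p \<longrightarrow> s \<in> A"
  shows "posacc T W A p"
proof -
  let ?P = "{q\<in>T. ext p q}"
  have ev: "\<exists>x\<in>Z. x \<noteq> 0 \<and> q @ [x] \<in> ?P" if h: "q \<in> ?P" "even (length q)" "block_subspace Z" "Z \<subseteq> W" for q Z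
  proof -
    have qT: "q \<in> T" and qe: "ext p q" using h by simp_all
    have "\<exists>n. \<forall>z\<in>tail V n. q @ [z] \<in> T" using rule qT h(2) unfolding is_rule_def by auto
    then obtain n where n: "\<forall>z\<in>tail V n. q @ [z] \<in> T" by blast
    obtain x where x: "x \<in> Z" "x \<noteq> 0" "n < Min (Poly_Mapping.keys x)" using BS2[OF h(3)] by blast
    have "x \<in> tail V n" using x h(4) WV unfolding tail_def by auto
    then have "q @ [x] \<in> T" using n by blast
    moreover have "ext p (q @ [x])" using qe by (rule ext_snocI)
    ultimately have "q @ [x] \<in> ?P" by simp
    then show ?thesis using x by blast
  qed
  have od: "\<exists>n. \<forall>y\<in>tail W n. q @ [y] \<in> T \<longrightarrow> q @ [y] \<in> ?P" if h: "q \<in> ?P" for q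
  proof -
    have "ext p (q @ [y])" for y using h by (simp add: ext_snocI)
    then show ?thesis by simp
  qed
  have win: "s \<in> A" if N: "\<forall>m\<ge>N. map s [0..<m] \<in> ?P" for s N
  proof -
    have "map s [0..<max N (length p)] \<in> ?P" using N[rule_format, of "max N (length p)"] by linarith
    then have e: "ext p (map s [0..<max N (length p)])" by simp
    have "s i = p ! i" if "i < length p" for i by (rule ext_map_prefix[OF e that])
    then have "map s [0..<length p] = p" by (intro nth_equalityI) auto
    then show ?thesis using A by blast
  qed
  have "qs T W A p ?P"
    by (rule qsI[OF _ _ ev od win]) (use pT ext_refl in simp_all)
  then show ?thesis unfolding posacc_def by blast
qed



definition xsE :: "('f vec list \<Rightarrow> 'f vec set list \<Rightarrow> 'f vec) \<Rightarrow> (nat \<Rightarrow> 'f vec) \<Rightarrow> (nat \<Rightarrow> 'f vec set) \<Rightarrow> nat \<Rightarrow> 'f vec" where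
  "xsE \<sigma>x ys Zs k = \<sigma>x (map ys [0..<k]) (map Zs [0..<Suc k])"
definition nsE :: "('f vec list \<Rightarrow> 'f vec set list \<Rightarrow> nat) \<Rightarrow> (nat \<Rightarrow> 'f vec) \<Rightarrow> (nat \<Rightarrow> 'f vec set) \<Rightarrow> nat \<Rightarrow> nat" where
  "nsE \<sigma>n ys Zs k = \<sigma>n (map ys [0..<k]) (map Zs [0..<Suc k])"
definition wE where "wE \<sigma>x ys Zs = game_stream True (xsE \<sigma>x ys Zs) ys"
definition IIokE :: "'f::field vec list set \<Rightarrow> 'f vec set \<Rightarrow> 'f vec list \<Rightarrow> _ \<Rightarrow> _ \<Rightarrow> _ \<Rightarrow> _ \<Rightarrow> nat \<Rightarrow> bool" where
  "IIokE T W v \<sigma>x \<sigma>n ys Zs k \<longleftrightarrow> block_subspace (Zs k) \<and> Zs k \<subseteq> W \<and>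
     (0 < k \<longrightarrow> ys (k - 1) \<in> tail W (nsE \<sigma>n ys Zs (k - 1)) \<and> v @ map (wE \<sigma>x ys Zs) [0..<2 * k] \<in> T)"
definition IokE :: "'f::field vec list set \<Rightarrow> 'f vec list \<Rightarrow> _ \<Rightarrow> _ \<Rightarrow> _ \<Rightarrow> nat \<Rightarrow> bool" where
  "IokE T v \<sigma>x ys Zs k \<longleftrightarrow> xsE \<sigma>x ys Zs k \<in> Zs k \<and> xsE \<sigma>x ys Zs k \<noteq> 0 \<and> v @ map (wE \<sigma>x ys Zs) [0..<2 * k + 1] \<in> T"

definition xsO :: "('f vec list \<Rightarrow> 'f vec set list \<Rightarrow> 'f vec) \<Rightarrow> (nat \<Rightarrow> 'f vec) \<Rightarrow> (nat \<Rightarrow> 'f vec set) \<Rightarrow> nat \<Rightarrow> 'f vec" where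
  "xsO \<sigma>x ys Zs k = \<sigma>x (map ys [0..<Suc k]) (map Zs [0..<Suc k])"
definition nsO :: "('f vec list \<Rightarrow> 'f vec set list \<Rightarrow> nat) \<Rightarrow> (nat \<Rightarrow> 'f vec) \<Rightarrow> (nat \<Rightarrow> 'f vec set) \<Rightarrow> nat \<Rightarrow> nat" where
  "nsO \<sigma>n ys Zs k = \<sigma>n (map ys [0..<k]) (map Zs [0..<k])"
definition wO where "wO \<sigma>x ys Zs = game_stream False (xsO \<sigma>x ys Zs) ys"
definition IIokO :: "'f::field vec list set \<Rightarrow> 'f vec set \<Rightarrow> 'f vec list \<Rightarrow> _ \<Rightarrow> _ \<Rightarrow> _ \<Rightarrow> _ \<Rightarrow> nat \<Rightarrow> bool" where
  "IIokO T W v \<sigma>x \<sigma>n ys Zs k \<longleftrightarrow> ys k \<in> tail W (nsO \<sigma>n ys Zs k) \<and> v @ map (wO \<sigma>x ys Zs) [0..<2 * k + 1] \<in> T \<and>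
     block_subspace (Zs k) \<and> Zs k \<subseteq> W"
definition IokO :: "'f::field vec list set \<Rightarrow> 'f vec list \<Rightarrow> _ \<Rightarrow> _ \<Rightarrow> _ \<Rightarrow> nat \<Rightarrow> bool" where
  "IokO T v \<sigma>x ys Zs k \<longleftrightarrow> (0 < k \<longrightarrow> xsO \<sigma>x ys Zs (k - 1) \<in> Zs (k - 1) \<and> xsO \<sigma>x ys Zs (k - 1) \<noteq> 0 \<and> v @ map (wO \<sigma>x ys Zs) [0..<2 * k] \<in> T)"

lemma strat_even:
  assumes "even (length v)"
  shows "I_strategy_in T W v A \<sigma>x \<sigma>n \<longleftrightarrow> (\<forall>ys Zs.
    (\<forall>k. (\<forall>j\<le>k. IIokE T W v \<sigma>x \<sigma>n ys Zs j) \<longrightarrow> IokE T v \<sigma>x ys Zs k) \<and>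
    ((\<forall>k. IIokE T W v \<sigma>x \<sigma>n ys Zs k) \<longrightarrow> outcome v (wE \<sigma>x ys Zs) \<in> A))"
  using assms unfolding I_strategy_in_def Let_def IIokE_def IokE_def wE_def xsE_def nsE_def
  by simp

lemma strat_odd:
  assumes "odd (length v)"
  shows "I_strategy_in T W v A \<sigma>x \<sigma>n \<longleftrightarrow> (\<forall>ys Zs.
    (\<forall>k. (\<forall>j<k. IIokO T W v \<sigma>x \<sigma>n ys Zs j) \<longrightarrow> IokO T v \<sigma>x ys Zs k) \<and>
    ((\<forall>k. IIokO T W v \<sigma>x \<sigma>n ys Zs k) \<longrightarrow> outcome v (wO \<sigma>x ys Zs) \<in> A))"
  using assms unfolding I_strategy_in_def Let_def IIokO_def IokO_def wO_def xsO_def nsO_def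
  by simp

lemma gs_T_even [simp]: "game_stream True xs ys (2 * k) = xs k"
  unfolding game_stream_def by simp
lemma gs_T_odd [simp]: "game_stream True xs ys (Suc (2 * k)) = ys k"
  unfolding game_stream_def by simp
lemma gs_F_even [simp]: "game_stream False xs ys (2 * k) = ys k"
  unfolding game_stream_def by simp
lemma gs_F_odd [simp]: "game_stream False xs ys (Suc (2 * k)) = xs k"
  unfolding game_stream_def by simp

lemma map_upt_Suc_app: "v @ map w [0..<Suc j] = (v @ map w [0..<j]) @ [w j]"
  by simp

lemma outcome_prefix: "map (outcome v w) [0..<length v + j] = v @ map w [0..<j]"
  by (rule nth_equalityI) (auto simp: outcome_def nth_append)

lemma outcome_shift: "outcome v w = outcome (v @ map w [0..<m]) (\<lambda>i. w (m + i))"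
  by (rule ext) (auto simp: outcome_def nth_append)

definition cx :: "'f::field vec list set \<Rightarrow> 'f vec list \<Rightarrow> 'f vec set \<Rightarrow> 'f vec" where
  "cx P p Z = (SOME x. x \<in> Z \<and> x \<noteq> 0 \<and> p @ [x] \<in> P)"
definition cn :: "'f::field vec list set \<Rightarrow> 'f vec set \<Rightarrow> 'f vec list set \<Rightarrow> 'f vec list \<Rightarrow> nat" where
  "cn T W P q = (SOME n. \<forall>y\<in>tail W n. q @ [y] \<in> T \<longrightarrow> q @ [y] \<in> P)"

primrec fe :: "'f::field vec list set \<Rightarrow> 'f vec list \<Rightarrow> ('f vec \<times> 'f vec set) list \<Rightarrow> 'f vec list" where
  "fe P p [] = p"
| "fe P p (a # r) = fe P (p @ [cx P p (snd a), fst a]) r"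

lemma fe_snoc: "fe P p (l @ [(y, Z)]) = fe P p l @ [cx P (fe P p l) Z, y]"
  by (induction l arbitrary: p) auto

lemma zip_map_upt: "zip (map f [0..<k]) (map g [0..<Suc k]) = map (\<lambda>i. (f i, g i)) [0..<k]"
  by (rule nth_equalityI) (auto simp: nth_append)

lemma zip_map_upt_eq: "zip (map f [0..<k]) (map g [0..<k]) = map (\<lambda>i. (f i, g i)) [0..<k]"
  by (rule nth_equalityI) auto

definition fxE :: "'f::field vec list set \<Rightarrow> 'f vec list \<Rightarrow> 'f vec list \<Rightarrow> 'f vec set list \<Rightarrow> 'f vec" where
  "fxE P v ys Zs = cx P (fe P v (zip ys Zs)) (last Zs)"
definition fnE :: "'f::field vec list set \<Rightarrow> 'f vec set \<Rightarrow> 'f vec list set \<Rightarrow> 'f vec list \<Rightarrow> 'f vec list \<Rightarrow> 'f vec set list \<Rightarrow> nat" where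
  "fnE T W P v ys Zs = cn T W P (fe P v (zip ys Zs) @ [fxE P v ys Zs])"

lemma cx_prop:
  assumes "qs T W A v P" "p \<in> P" "even (length p)" "block_subspace Z" "Z \<subseteq> W"
  shows "cx P p Z \<in> Z \<and> cx P p Z \<noteq> 0 \<and> p @ [cx P p Z] \<in> P"
proof -
  have "\<exists>x. x \<in> Z \<and> x \<noteq> 0 \<and> p @ [x] \<in> P" using qs_even[OF assms] by blast
  then show ?thesis unfolding cx_def by (rule someI_ex)
qed

lemma cn_prop:
  assumes "qs T W A v P" "p \<in> P" "odd (length p)"
  shows "\<forall>y\<in>tail W (cn T W P p). p @ [y] \<in> T \<longrightarrow> p @ [y] \<in> P"
proof -
  have "\<exists>n. \<forall>y\<in>tail W n. p @ [y] \<in> T \<longrightarrow> p @ [y] \<in> P" using qs_odd[OF assms] .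
  then show ?thesis unfolding cn_def by (rule someI_ex)
qed

lemma follow_even:
  assumes qs: "qs T W A v P" and ev: "even (length v)"
  shows "I_strategy_in T W v A (fxE P v) (fnE T W P v)"
  unfolding strat_even[OF ev]
proof (intro allI conjI impI)
  fix ys :: "nat \<Rightarrow> _" and Zs :: "nat \<Rightarrow> _"
  let ?sx = "fxE P v" and ?sn = "fnE T W P v"
  define pe where "pe k = fe P v (map (\<lambda>i. (ys i, Zs i)) [0..<k])" for k
  define w where "w = wE ?sx ys Zs"
  have xk: "xsE ?sx ys Zs k = cx P (pe k) (Zs k)" for k
    unfolding xsE_def fxE_def pe_def zip_map_upt by simp
  have nk: "nsE ?sn ys Zs k = cn T W P (pe k @ [cx P (pe k) (Zs k)])" for k
    unfolding nsE_def fnE_def using xk[of k] unfolding xsE_def pe_def zip_map_upt fxE_def by simp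
  have pos: "v @ map w [0..<2 * k] = pe k" for k
  proof (induction k)
    case 0 then show ?case by (simp add: pe_def)
  next
    case (Suc k)
    have "v @ map w [0..<2 * Suc k] = (v @ map w [0..<2 * k]) @ [w (2 * k), w (Suc (2 * k))]"
      by simp
    also have "\<dots> = pe k @ [cx P (pe k) (Zs k), ys k]"
      using Suc xk[of k] unfolding w_def wE_def by simp
    also have "\<dots> = pe (Suc k)" unfolding pe_def by (simp add: fe_snoc)
    finally show ?case .
  qed
  have pos1: "v @ map w [0..<2 * k + 1] = pe k @ [cx P (pe k) (Zs k)]" for k
    using pos[of k] xk[of k] unfolding w_def wE_def by simp
  have lpe: "length (pe k) = length v + 2 * k" for k
    using pos[of k, symmetric] by simp
  have inv: "pe k \<in> P" if "\<forall>j\<le>k. IIokE T W v ?sx ?sn ys Zs j" for k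
    using that
  proof (induction k)
    case 0 then show ?case using qs_root[OF qs] by (simp add: pe_def)
  next
    case (Suc k)
    have pk: "pe k \<in> P" using Suc by simp
    have IIk: "block_subspace (Zs k) \<and> Zs k \<subseteq> W" using Suc.prems unfolding IIokE_def by auto
    have c: "cx P (pe k) (Zs k) \<in> Zs k \<and> cx P (pe k) (Zs k) \<noteq> 0 \<and> pe k @ [cx P (pe k) (Zs k)] \<in> P"
      using cx_prop[OF qs pk _ ] IIk lpe[of k] ev by simp
    have od: "odd (length (pe k @ [cx P (pe k) (Zs k)]))" using lpe[of k] ev by simp
    have IIS: "ys k \<in> tail W (nsE ?sn ys Zs k) \<and> v @ map w [0..<2 * Suc k] \<in> T"
      using Suc.prems unfolding IIokE_def w_def by fastforce
    have "pe (Suc k) = (pe k @ [cx P (pe k) (Zs k)]) @ [ys k]"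
      unfolding pe_def by (simp add: fe_snoc)
    moreover have "pe (Suc k) \<in> T" using IIS pos[of "Suc k"] by metis
    then have "(pe k @ [cx P (pe k) (Zs k)]) @ [ys k] \<in> T" using calculation by simp
    ultimately show ?case using cn_prop[OF qs c[THEN conjunct2, THEN conjunct2] od] IIS nk[of k] by simp
  qed
  show "IokE T v ?sx ys Zs k" if "\<forall>j\<le>k. IIokE T W v ?sx ?sn ys Zs j" for k
  proof -
    have pk: "pe k \<in> P" using inv that by blast
    have IIk: "block_subspace (Zs k) \<and> Zs k \<subseteq> W" using that unfolding IIokE_def by auto
    have c: "cx P (pe k) (Zs k) \<in> Zs k \<and> cx P (pe k) (Zs k) \<noteq> 0 \<and> pe k @ [cx P (pe k) (Zs k)] \<in> P"
      using cx_prop[OF qs pk _ ] IIk lpe[of k] ev by simp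
    have "v @ map w [0..<2 * k + 1] \<in> T" using pos1[of k] c qs_T[OF qs] by metis
    then show ?thesis unfolding IokE_def using xk[of k] c unfolding w_def by simp
  qed
  show "outcome v (wE ?sx ys Zs) \<in> A" if all: "\<forall>k. IIokE T W v ?sx ?sn ys Zs k"
  proof -
    have pk: "pe k \<in> P" for k using inv all by blast
    have pk1: "pe k @ [cx P (pe k) (Zs k)] \<in> P" for k
    proof -
      have IIk: "block_subspace (Zs k) \<and> Zs k \<subseteq> W" using all unfolding IIokE_def by auto
      show ?thesis using cx_prop[OF qs pk _ ] IIk lpe[of k] ev by simp
    qed
    have "v @ map w [0..<j] \<in> P" for j
    proof (cases "even j")
      case True then obtain k where "j = 2 * k" by (rule evenE)
      then show ?thesis using pos pk by simp
    next
      case False then obtain k where "j = 2 * k + 1" by (rule oddE)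
      then show ?thesis using pos1[of k] pk1[of k] by metis
    qed
    then have "\<forall>m\<ge>length v. map (outcome v w) [0..<m] \<in> P"
      by (metis outcome_prefix le_add_diff_inverse)
    then show ?thesis using qs_win[OF qs] unfolding w_def by blast
  qed
qed

lemma map_upt_Suc_Cons: "map f [0..<Suc k] = f 0 # map (\<lambda>i. f (Suc i)) [0..<k]"
  by (induction k) auto

context
  fixes \<sigma>x :: "'f::field vec list \<Rightarrow> 'f vec set list \<Rightarrow> 'f vec" and \<sigma>n :: "'f vec list \<Rightarrow> 'f vec set list \<Rightarrow> nat"
    and yz :: "'f vec" and ys :: "nat \<Rightarrow> 'f vec" and Zs :: "nat \<Rightarrow> 'f vec set"
  assumes yz: "ys 0 = yz"
begin

lemma c1: "xsE (\<lambda>l Z. \<sigma>x (yz # l) Z) (\<lambda>i. ys (Suc i)) Zs k = xsO \<sigma>x ys Zs k"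
  unfolding xsE_def xsO_def map_upt_Suc_Cons[of ys] yz ..

lemma c2: "nsE (\<lambda>l Z. \<sigma>n (yz # l) Z) (\<lambda>i. ys (Suc i)) Zs k = nsO \<sigma>n ys Zs (Suc k)"
  unfolding nsE_def nsO_def map_upt_Suc_Cons[of ys] yz ..

lemma c3: "wE (\<lambda>l Z. \<sigma>x (yz # l) Z) (\<lambda>i. ys (Suc i)) Zs j = wO \<sigma>x ys Zs (Suc j)"
proof (cases "even j")
  case True
  then obtain k where k: "j = 2 * k" by (rule evenE)
  have "Suc j = Suc (2 * k)" using k by simp
  then show ?thesis unfolding wE_def wO_def using k c1[of k] by simp
next
  case False
  then obtain k where k: "j = Suc (2 * k)" by (metis oddE Suc_eq_plus1)
  have "Suc j = 2 * Suc k" using k by simp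
  then show ?thesis unfolding wE_def wO_def using k by (simp del: mult_Suc_right)
qed

lemma c4: "(v @ [yz]) @ map (wE (\<lambda>l Z. \<sigma>x (yz # l) Z) (\<lambda>i. ys (Suc i)) Zs) [0..<j] = v @ map (wO \<sigma>x ys Zs) [0..<Suc j]"
proof -
  have w0: "wO \<sigma>x ys Zs 0 = yz" unfolding wO_def game_stream_def using yz by simp
  show ?thesis unfolding map_upt_Suc_Cons[of "wO \<sigma>x ys Zs"] w0 c3 by simp
qed

lemma c4': "(v @ [yz]) @ map (wE (\<lambda>l Z. \<sigma>x (yz # l) Z) (\<lambda>i. ys (Suc i)) Zs) [0..<2 * k] = v @ map (wO \<sigma>x ys Zs) [0..<2 * k + 1]"
  using c4[of v "2 * k"] by simp

lemma c5: "IIokE T W (v @ [yz]) (\<lambda>l Z. \<sigma>x (yz # l) Z) (\<lambda>l Z. \<sigma>n (yz # l) Z) (\<lambda>i. ys (Suc i)) Zs k \<longleftrightarrow>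
   block_subspace (Zs k) \<and> Zs k \<subseteq> W \<and> (0 < k \<longrightarrow> ys k \<in> tail W (nsO \<sigma>n ys Zs k) \<and> v @ map (wO \<sigma>x ys Zs) [0..<2 * k + 1] \<in> T)"
proof (cases k)
  case 0 then show ?thesis unfolding IIokE_def by simp
next
  case (Suc k')
  then show ?thesis unfolding IIokE_def c2 c4' by simp
qed

lemma c6: "IokE T (v @ [yz]) (\<lambda>l Z. \<sigma>x (yz # l) Z) (\<lambda>i. ys (Suc i)) Zs k \<longleftrightarrow> IokO T v \<sigma>x ys Zs (Suc k)"
proof -
  have eq: "(v @ [yz]) @ map (wE (\<lambda>l Z. \<sigma>x (yz # l) Z) (\<lambda>i. ys (Suc i)) Zs) [0..<2 * k + 1] = v @ map (wO \<sigma>x ys Zs) [0..<2 * Suc k]"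
    using c4[of v "2 * k + 1"] by simp
  show ?thesis unfolding IokE_def IokO_def c1 eq by simp
qed

lemma c7: "outcome (v @ [yz]) (wE (\<lambda>l Z. \<sigma>x (yz # l) Z) (\<lambda>i. ys (Suc i)) Zs) = outcome v (wO \<sigma>x ys Zs)"
proof -
  have w0: "wO \<sigma>x ys Zs 0 = yz" unfolding wO_def game_stream_def using yz by simp
  have "outcome v (wO \<sigma>x ys Zs) = outcome (v @ map (wO \<sigma>x ys Zs) [0..<1]) (\<lambda>i. wO \<sigma>x ys Zs (1 + i))"
    by (rule outcome_shift)
  also have "\<dots> = outcome (v @ [yz]) (wE (\<lambda>l Z. \<sigma>x (yz # l) Z) (\<lambda>i. ys (Suc i)) Zs)"
  proof -
    have "wE (\<lambda>l Z. \<sigma>x (yz # l) Z) (\<lambda>i. ys (Suc i)) Zs = (\<lambda>i. wO \<sigma>x ys Zs (1 + i))"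
      by (rule ext) (simp add: c3)
    then show ?thesis using w0 by simp
  qed
  finally show ?thesis by simp
qed

lemma c8: "IIokO T W v \<sigma>x \<sigma>n ys Zs k \<Longrightarrow> IIokE T W (v @ [yz]) (\<lambda>l Z. \<sigma>x (yz # l) Z) (\<lambda>l Z. \<sigma>n (yz # l) Z) (\<lambda>i. ys (Suc i)) Zs k"
  unfolding c5 IIokO_def by simp

lemma c9: "IIokE T W (v @ [yz]) (\<lambda>l Z. \<sigma>x (yz # l) Z) (\<lambda>l Z. \<sigma>n (yz # l) Z) (\<lambda>i. ys (Suc i)) Zs k \<Longrightarrow>
    (k = 0 \<longrightarrow> yz \<in> tail W (\<sigma>n [] []) \<and> v @ [yz] \<in> T) \<Longrightarrow> IIokO T W v \<sigma>x \<sigma>n ys Zs k"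
proof (cases k)
  case 0
  have "v @ map (wO \<sigma>x ys Zs) [0..<1] = v @ [yz]" unfolding wO_def game_stream_def using yz by simp
  then show "IIokE T W (v @ [yz]) (\<lambda>l Z. \<sigma>x (yz # l) Z) (\<lambda>l Z. \<sigma>n (yz # l) Z) (\<lambda>i. ys (Suc i)) Zs k \<Longrightarrow>
    (k = 0 \<longrightarrow> yz \<in> tail W (\<sigma>n [] []) \<and> v @ [yz] \<in> T) \<Longrightarrow> IIokO T W v \<sigma>x \<sigma>n ys Zs k"
    using 0 yz unfolding c5 IIokO_def nsO_def by simp
next
  case (Suc k')
  then show "IIokE T W (v @ [yz]) (\<lambda>l Z. \<sigma>x (yz # l) Z) (\<lambda>l Z. \<sigma>n (yz # l) Z) (\<lambda>i. ys (Suc i)) Zs k \<Longrightarrow>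
    (k = 0 \<longrightarrow> yz \<in> tail W (\<sigma>n [] []) \<and> v @ [yz] \<in> T) \<Longrightarrow> IIokO T W v \<sigma>x \<sigma>n ys Zs k"
    unfolding c5 IIokO_def by simp
qed

end

lemma odd_build:
  fixes \<tau>x :: "'f::field vec \<Rightarrow> 'f vec list \<Rightarrow> 'f vec set list \<Rightarrow> 'f vec"
    and \<tau>n :: "'f vec \<Rightarrow> 'f vec list \<Rightarrow> 'f vec set list \<Rightarrow> nat" and v :: "'f vec list"
  assumes od: "odd (length v)"
    and \<tau>: "\<And>y. y \<in> tail W n0 \<Longrightarrow> v @ [y] \<in> T \<Longrightarrow> I_strategy_in T W (v @ [y]) A (\<tau>x y) (\<tau>n y)"
  shows "I_strategy_in T W v A (\<lambda>l Z. \<tau>x (hd l) (tl l) Z) (\<lambda>l Z. if l = [] then n0 else \<tau>n (hd l) (tl l) Z)"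
  unfolding strat_odd[OF od]
proof (intro allI)
  fix ys :: "nat \<Rightarrow> 'f vec" and Zs :: "nat \<Rightarrow> 'f vec set"
  let ?sx = "\<lambda>l Z. \<tau>x (hd l) (tl l) Z" and ?sn = "\<lambda>l Z. if l = [] then n0 else \<tau>n (hd l) (tl l) Z"
  define y0 where "y0 = ys 0"
  have y0': "ys 0 = y0" unfolding y0_def ..
  have ex: "(\<lambda>l Z. ?sx (y0 # l) Z) = \<tau>x y0" "(\<lambda>l Z. ?sn (y0 # l) Z) = \<tau>n y0" by auto
  have ev: "even (length (v @ [y0]))" using od by simp
  show "(\<forall>k. (\<forall>j<k. IIokO T W v ?sx ?sn ys Zs j) \<longrightarrow> IokO T v ?sx ys Zs k) \<and>
        ((\<forall>k. IIokO T W v ?sx ?sn ys Zs k) \<longrightarrow> outcome v (wO ?sx ys Zs) \<in> A)"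
  proof (cases "IIokO T W v ?sx ?sn ys Zs 0")
    case False
    have "IokO T v ?sx ys Zs k" if "\<forall>j<k. IIokO T W v ?sx ?sn ys Zs j" for k
      using that False by (cases k) (auto simp: IokO_def)
    then show ?thesis using False by blast
  next
    case True
    then have "y0 \<in> tail W n0" "v @ [y0] \<in> T"
      unfolding IIokO_def nsO_def wO_def game_stream_def using y0' by auto
    then have st: "I_strategy_in T W (v @ [y0]) A (\<lambda>l Z. ?sx (y0 # l) Z) (\<lambda>l Z. ?sn (y0 # l) Z)"
      unfolding ex using \<tau> by blast
    note S = st[unfolded strat_even[OF ev], rule_format, of "\<lambda>i. ys (Suc i)" Zs]
    have A1: "IokO T v ?sx ys Zs k" if "\<forall>j<k. IIokO T W v ?sx ?sn ys Zs j" for k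
    proof (cases k)
      case 0 then show ?thesis by (simp add: IokO_def)
    next
      case (Suc k')
      have "\<forall>j\<le>k'. IIokE T W (v @ [y0]) (\<lambda>l Z. ?sx (y0 # l) Z) (\<lambda>l Z. ?sn (y0 # l) Z) (\<lambda>i. ys (Suc i)) Zs j"
        using that Suc c8[where ys=ys and yz=y0 and Zs=Zs and \<sigma>x= ?sx and \<sigma>n= ?sn, OF y0', of T W v] by auto
      then have "IokE T (v @ [y0]) (\<lambda>l Z. ?sx (y0 # l) Z) (\<lambda>i. ys (Suc i)) Zs k'" using S by blast
      then show ?thesis using c6[where ys=ys and yz=y0 and Zs=Zs and \<sigma>x= ?sx, OF y0'] Suc by simp
    qed
    have A2: "outcome v (wO ?sx ys Zs) \<in> A" if "\<forall>k. IIokO T W v ?sx ?sn ys Zs k"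
    proof -
      have "\<forall>k. IIokE T W (v @ [y0]) (\<lambda>l Z. ?sx (y0 # l) Z) (\<lambda>l Z. ?sn (y0 # l) Z) (\<lambda>i. ys (Suc i)) Zs k"
        using that c8[where ys=ys and yz=y0 and Zs=Zs and \<sigma>x= ?sx and \<sigma>n= ?sn, OF y0', of T W v] by auto
      then have "outcome (v @ [y0]) (wE (\<lambda>l Z. ?sx (y0 # l) Z) (\<lambda>i. ys (Suc i)) Zs) \<in> A" using S by blast
      then show ?thesis using c7[where ys=ys and yz=y0 and Zs=Zs and \<sigma>x= ?sx, OF y0'] by simp
    qed
    show ?thesis using A1 A2 by blast
  qed
qed

lemma odd_decomp:
  fixes \<sigma>x :: "'f::field vec list \<Rightarrow> 'f vec set list \<Rightarrow> 'f vec"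
    and \<sigma>n :: "'f vec list \<Rightarrow> 'f vec set list \<Rightarrow> nat" and v :: "'f vec list"
  assumes od: "odd (length v)" and st: "I_strategy_in T W v A \<sigma>x \<sigma>n"
    and y0: "y0 \<in> tail W (\<sigma>n [] [])" "v @ [y0] \<in> T"
  shows "I_strategy_in T W (v @ [y0]) A (\<lambda>l Z. \<sigma>x (y0 # l) Z) (\<lambda>l Z. \<sigma>n (y0 # l) Z)"
proof -
  have ev: "even (length (v @ [y0]))" using od by simp
  show ?thesis unfolding strat_even[OF ev]
  proof (intro allI)
    fix ys' :: "nat \<Rightarrow> 'f vec" and Zs :: "nat \<Rightarrow> 'f vec set"
    define ys where "ys = case_nat y0 ys'"
    have ys0: "ys 0 = y0" unfolding ys_def by simp
    have ysS: "(\<lambda>i. ys (Suc i)) = ys'" unfolding ys_def by simp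
    note S = st[unfolded strat_odd[OF od], rule_format, of ys Zs]
    have tr: "IIokO T W v \<sigma>x \<sigma>n ys Zs j"
      if "IIokE T W (v @ [y0]) (\<lambda>l Z. \<sigma>x (y0 # l) Z) (\<lambda>l Z. \<sigma>n (y0 # l) Z) ys' Zs j" for j
      using c9[where ys=ys and yz=y0 and Zs=Zs and \<sigma>x= \<sigma>x and \<sigma>n= \<sigma>n, OF ys0, of T W v j] that y0 unfolding ysS by blast
    show "(\<forall>k. (\<forall>j\<le>k. IIokE T W (v @ [y0]) (\<lambda>l Z. \<sigma>x (y0 # l) Z) (\<lambda>l Z. \<sigma>n (y0 # l) Z) ys' Zs j) \<longrightarrow>
               IokE T (v @ [y0]) (\<lambda>l Z. \<sigma>x (y0 # l) Z) ys' Zs k) \<and>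
          ((\<forall>k. IIokE T W (v @ [y0]) (\<lambda>l Z. \<sigma>x (y0 # l) Z) (\<lambda>l Z. \<sigma>n (y0 # l) Z) ys' Zs k) \<longrightarrow>
               outcome (v @ [y0]) (wE (\<lambda>l Z. \<sigma>x (y0 # l) Z) ys' Zs) \<in> A)"
    proof (intro conjI allI impI)
      fix k assume "\<forall>j\<le>k. IIokE T W (v @ [y0]) (\<lambda>l Z. \<sigma>x (y0 # l) Z) (\<lambda>l Z. \<sigma>n (y0 # l) Z) ys' Zs j"
      then have "\<forall>j<Suc k. IIokO T W v \<sigma>x \<sigma>n ys Zs j" using tr by auto
      then have "IokO T v \<sigma>x ys Zs (Suc k)" using S by blast
      then show "IokE T (v @ [y0]) (\<lambda>l Z. \<sigma>x (y0 # l) Z) ys' Zs k" using c6[where ys=ys and yz=y0 and Zs=Zs and \<sigma>x= \<sigma>x, OF ys0] unfolding ysS by simp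
    next
      assume "\<forall>k. IIokE T W (v @ [y0]) (\<lambda>l Z. \<sigma>x (y0 # l) Z) (\<lambda>l Z. \<sigma>n (y0 # l) Z) ys' Zs k"
      then have "\<forall>k. IIokO T W v \<sigma>x \<sigma>n ys Zs k" using tr by auto
      then have "outcome v (wO \<sigma>x ys Zs) \<in> A" using S by blast
      then show "outcome (v @ [y0]) (wE (\<lambda>l Z. \<sigma>x (y0 # l) Z) ys' Zs) \<in> A" using c7[where ys=ys and yz=y0 and Zs=Zs and \<sigma>x= \<sigma>x, OF ys0] unfolding ysS by simp
    qed
  qed
qed


lemma map_upt_add: "map f [0..<a + b] = map f [0..<a] @ map (\<lambda>i. f (a + i)) [0..<b]"
proof (induction b)
  case (Suc b) then show ?case by (simp add: add.assoc)
qed simp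

lemma drop_map_upt: "m \<le> k \<Longrightarrow> drop m (map f [0..<k]) = map (\<lambda>i. f (m + i)) [0..<k - m]"
  by (rule nth_equalityI) auto

lemma shift_corr:
  fixes \<sigma>x :: "'f::field vec list \<Rightarrow> 'f vec set list \<Rightarrow> 'f vec" and \<sigma>n :: "'f vec list \<Rightarrow> 'f vec set list \<Rightarrow> nat"
    and \<tau>x :: "'f vec list \<Rightarrow> 'f vec set list \<Rightarrow> 'f vec" and \<tau>n :: "'f vec list \<Rightarrow> 'f vec set list \<Rightarrow> nat"
  assumes hx: "\<And>i. xsE \<sigma>x ys Zs (m + i) = xsE \<tau>x (\<lambda>i. ys (m + i)) (\<lambda>i. Zs (m + i)) i"
    and hn: "\<And>i. nsE \<sigma>n ys Zs (m + i) = nsE \<tau>n (\<lambda>i. ys (m + i)) (\<lambda>i. Zs (m + i)) i"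
    and hq: "v @ map (wE \<sigma>x ys Zs) [0..<2 * m] = q"
  shows "v @ map (wE \<sigma>x ys Zs) [0..<2 * m + j] = q @ map (wE \<tau>x (\<lambda>i. ys (m + i)) (\<lambda>i. Zs (m + i))) [0..<j]"
    and "IIokE T W v \<sigma>x \<sigma>n ys Zs (m + i) \<Longrightarrow> IIokE T W q \<tau>x \<tau>n (\<lambda>i. ys (m + i)) (\<lambda>i. Zs (m + i)) i"
    and "IokE T q \<tau>x (\<lambda>i. ys (m + i)) (\<lambda>i. Zs (m + i)) i \<Longrightarrow> IokE T v \<sigma>x ys Zs (m + i)"
    and "outcome v (wE \<sigma>x ys Zs) = outcome q (wE \<tau>x (\<lambda>i. ys (m + i)) (\<lambda>i. Zs (m + i)))"
proof -
  let ?w = "wE \<sigma>x ys Zs" and ?wt = "wE \<tau>x (\<lambda>i. ys (m + i)) (\<lambda>i. Zs (m + i))"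
  have ww: "?w (2 * m + j) = ?wt j" for j
  proof (cases "even j")
    case True
    then obtain i where i: "j = 2 * i" by (rule evenE)
    show ?thesis using i hx[of i] unfolding wE_def game_stream_def by simp
  next
    case False
    then obtain i where i: "j = Suc (2 * i)" by (metis oddE Suc_eq_plus1)
    show ?thesis using i unfolding wE_def game_stream_def by simp
  qed
  have wfun: "(\<lambda>i. ?w (2 * m + i)) = ?wt" using ww by (rule ext)
  show A: "v @ map ?w [0..<2 * m + j] = q @ map ?wt [0..<j]" for j
    unfolding map_upt_add[of ?w "2 * m" j] using hq wfun by simp
  show "IIokE T W q \<tau>x \<tau>n (\<lambda>i. ys (m + i)) (\<lambda>i. Zs (m + i)) i" if "IIokE T W v \<sigma>x \<sigma>n ys Zs (m + i)"
  proof (cases i)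
    case 0 then show ?thesis using that unfolding IIokE_def by simp
  next
    case (Suc i')
    have e1: "m + i - 1 = m + i'" using Suc by simp
    have e2: "v @ map ?w [0..<2 * (m + i)] = q @ map ?wt [0..<2 * i]"
      using A[of "2 * i"] by (simp add: algebra_simps)
    show ?thesis using that Suc unfolding IIokE_def e1 hn e2 by simp
  qed
  show "IokE T v \<sigma>x ys Zs (m + i)" if "IokE T q \<tau>x (\<lambda>i. ys (m + i)) (\<lambda>i. Zs (m + i)) i"
  proof -
    have e2: "v @ map ?w [0..<2 * (m + i) + 1] = q @ map ?wt [0..<2 * i + 1]"
      using A[of "2 * i + 1"] by (simp add: algebra_simps)
    show ?thesis using that unfolding IokE_def e2 hx by simp
  qed
  show "outcome v ?w = outcome q ?wt"
    using outcome_shift[of v ?w "2 * m"] hq wfun by simp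
qed

definition p\<sigma> :: "('f vec list \<Rightarrow> 'f vec set list \<Rightarrow> 'f vec) \<Rightarrow> 'f vec list \<Rightarrow> 'f vec list \<Rightarrow> 'f vec set list \<Rightarrow> nat \<Rightarrow> 'f vec list" where
  "p\<sigma> \<sigma>x v ysl Zsl j = v @ concat (map (\<lambda>i. [\<sigma>x (take i ysl) (take (Suc i) Zsl), ysl ! i]) [0..<j])"

definition exitat :: "'f vec list set \<Rightarrow> ('f vec list \<Rightarrow> 'f vec set list \<Rightarrow> 'f vec) \<Rightarrow> 'f vec list \<Rightarrow> 'f vec list \<Rightarrow> 'f vec set list \<Rightarrow> nat \<Rightarrow> bool" where
  "exitat S \<sigma>x v ysl Zsl j \<longleftrightarrow> j < length ysl \<and> p\<sigma> \<sigma>x v ysl Zsl (Suc j) \<notin> S"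

definition swx where
  "swx S \<sigma>x \<tau>x v ysl Zsl = (if (\<exists>j. exitat S \<sigma>x v ysl Zsl j)
     then \<tau>x (p\<sigma> \<sigma>x v ysl Zsl (Suc (LEAST j. exitat S \<sigma>x v ysl Zsl j)))
            (drop (Suc (LEAST j. exitat S \<sigma>x v ysl Zsl j)) ysl) (drop (Suc (LEAST j. exitat S \<sigma>x v ysl Zsl j)) Zsl)
     else \<sigma>x ysl Zsl)"

definition swn where
  "swn S \<sigma>x \<sigma>n \<tau>n v ysl Zsl = (if (\<exists>j. exitat S \<sigma>x v ysl Zsl j)
     then \<tau>n (p\<sigma> \<sigma>x v ysl Zsl (Suc (LEAST j. exitat S \<sigma>x v ysl Zsl j)))
            (drop (Suc (LEAST j. exitat S \<sigma>x v ysl Zsl j)) ysl) (drop (Suc (LEAST j. exitat S \<sigma>x v ysl Zsl j)) Zsl)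
     else \<sigma>n ysl Zsl)"

lemma concat_w: "concat (map (\<lambda>i. [xsE \<sigma>x ys Zs i, ys i]) [0..<j]) = map (wE \<sigma>x ys Zs) [0..<2 * j]"
proof (induction j)
  case (Suc j)
  have "map (wE \<sigma>x ys Zs) [0..<2 * Suc j] = map (wE \<sigma>x ys Zs) [0..<2 * j] @ [wE \<sigma>x ys Zs (2 * j), wE \<sigma>x ys Zs (Suc (2 * j))]"
    by simp
  then show ?case using Suc unfolding wE_def by simp
qed simp

lemma p\<sigma>_eq:
  assumes "j \<le> k" "j \<le> K"
  shows "p\<sigma> \<sigma>x v (map ys [0..<k]) (map Zs [0..<K]) j = v @ map (wE \<sigma>x ys Zs) [0..<2 * j]"
proof -
  have "map (\<lambda>i. [\<sigma>x (take i (map ys [0..<k])) (take (Suc i) (map Zs [0..<K])), map ys [0..<k] ! i]) [0..<j]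
      = map (\<lambda>i. [xsE \<sigma>x ys Zs i, ys i]) [0..<j]"
    using assms by (auto simp: xsE_def take_map)
  then show ?thesis by (simp only: p\<sigma>_def concat_w)
qed


lemma even_switch:
  fixes \<sigma>x :: "'f::field vec list \<Rightarrow> 'f vec set list \<Rightarrow> 'f vec" and \<sigma>n :: "'f vec list \<Rightarrow> 'f vec set list \<Rightarrow> nat"
    and \<tau>x :: "'f vec list \<Rightarrow> 'f vec list \<Rightarrow> 'f vec set list \<Rightarrow> 'f vec"
    and \<tau>n :: "'f vec list \<Rightarrow> 'f vec list \<Rightarrow> 'f vec set list \<Rightarrow> nat" and v :: "'f vec list"
  assumes ev: "even (length v)" and ST: "S \<subseteq> T" and st: "I_strategy_in S W v A \<sigma>x \<sigma>n"
    and \<tau>: "\<And>q. q \<in> T \<Longrightarrow> ext v q \<Longrightarrow> q \<notin> S \<Longrightarrow> even (length q) \<Longrightarrow> I_strategy_in T W q A (\<tau>x q) (\<tau>n q)"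
  shows "I_strategy_in T W v A (swx S \<sigma>x \<tau>x v) (swn S \<sigma>x \<sigma>n \<tau>n v)"
  unfolding strat_even[OF ev]
proof (intro allI)
  fix ys :: "nat \<Rightarrow> 'f vec" and Zs :: "nat \<Rightarrow> 'f vec set"
  let ?sx = "swx S \<sigma>x \<tau>x v" and ?sn = "swn S \<sigma>x \<sigma>n \<tau>n v"
  let ?w = "wE \<sigma>x ys Zs" and ?w' = "wE ?sx ys Zs"
  define E where "E j \<longleftrightarrow> v @ map ?w [0..<2 * Suc j] \<notin> S" for j
  note S = st[unfolded strat_even[OF ev], rule_format, of ys Zs]
  have exi: "exitat S \<sigma>x v (map ys [0..<k]) (map Zs [0..<K]) j \<longleftrightarrow> j < k \<and> E j" if "k \<le> K" for k K j
    unfolding exitat_def E_def using p\<sigma>_eq[of "Suc j" k K \<sigma>x v ys Zs] that by auto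
  have noex: "swx S \<sigma>x \<tau>x v (map ys [0..<k]) (map Zs [0..<K]) = \<sigma>x (map ys [0..<k]) (map Zs [0..<K])
     \<and> swn S \<sigma>x \<sigma>n \<tau>n v (map ys [0..<k]) (map Zs [0..<K]) = \<sigma>n (map ys [0..<k]) (map Zs [0..<K])"
    if "k \<le> K" "\<forall>j<k. \<not> E j" for k K
  proof -
    have ne: "(\<exists>j. exitat S \<sigma>x v (map ys [0..<k]) (map Zs [0..<K]) j) = False" using exi[OF that(1)] that(2) by blast
    show ?thesis unfolding swx_def swn_def ne if_False by simp
  qed
  have yex: "swx S \<sigma>x \<tau>x v (map ys [0..<k]) (map Zs [0..<K]) =
        \<tau>x (v @ map ?w [0..<2 * Suc e]) (drop (Suc e) (map ys [0..<k])) (drop (Suc e) (map Zs [0..<K]))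
     \<and> swn S \<sigma>x \<sigma>n \<tau>n v (map ys [0..<k]) (map Zs [0..<K]) =
        \<tau>n (v @ map ?w [0..<2 * Suc e]) (drop (Suc e) (map ys [0..<k])) (drop (Suc e) (map Zs [0..<K]))"
    if "k \<le> K" "e < k" "E e" "\<forall>j<e. \<not> E j" for k K e
  proof -
    have ex: "exitat S \<sigma>x v (map ys [0..<k]) (map Zs [0..<K]) e" using exi[OF that(1)] that by blast
    have le: "(LEAST j. exitat S \<sigma>x v (map ys [0..<k]) (map Zs [0..<K]) j) = e"
    proof (rule Least_equality[where P="exitat S \<sigma>x v (map ys [0..<k]) (map Zs [0..<K])", OF ex])
      fix y assume "exitat S \<sigma>x v (map ys [0..<k]) (map Zs [0..<K]) y"
      then show "e \<le> y" using exi[OF that(1)] that(4) by (meson not_le)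
    qed
    have pe: "p\<sigma> \<sigma>x v (map ys [0..<k]) (map Zs [0..<K]) (Suc e) = v @ map ?w [0..<2 * Suc e]"
      using p\<sigma>_eq[of "Suc e" k K \<sigma>x v ys Zs] that by simp
    show ?thesis unfolding swx_def swn_def le pe using ex by auto
  qed
  show "(\<forall>k. (\<forall>j\<le>k. IIokE T W v ?sx ?sn ys Zs j) \<longrightarrow> IokE T v ?sx ys Zs k) \<and>
        ((\<forall>k. IIokE T W v ?sx ?sn ys Zs k) \<longrightarrow> outcome v ?w' \<in> A)"
  proof (cases "\<exists>j. E j")
    case False
    have xe: "xsE ?sx ys Zs k = xsE \<sigma>x ys Zs k" and ne: "nsE ?sn ys Zs k = nsE \<sigma>n ys Zs k" for k
      using noex[of k "Suc k"] False unfolding xsE_def nsE_def by auto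
    have xfun: "xsE ?sx ys Zs = xsE \<sigma>x ys Zs" using xe by (rule ext)
    have wsame: "?w' = ?w" unfolding wE_def xfun ..
    have tr: "IIokE S W v \<sigma>x \<sigma>n ys Zs j" if "IIokE T W v ?sx ?sn ys Zs j" for j
    proof (cases j)
      case 0 then show ?thesis using that unfolding IIokE_def by simp
    next
      case (Suc j')
      have "\<not> E j'" using False by blast
      then have "v @ map ?w [0..<2 * j] \<in> S" unfolding E_def Suc by simp
      then show ?thesis using that unfolding IIokE_def ne wsame by simp
    qed
    have tr2: "IokE T v ?sx ys Zs k" if "IokE S v \<sigma>x ys Zs k" for k
      using that ST unfolding IokE_def xe wsame by auto
    show ?thesis using S tr tr2 wsame by metis
  next
    case True
    define e where "e = (LEAST j. E j)"
    have Ee: "E e" unfolding e_def using True by (metis LeastI)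
    have Eb: "\<forall>j<e. \<not> E j" unfolding e_def using not_less_Least by blast
    define m where "m = Suc e"
    define q where "q = v @ map ?w [0..<2 * m]"
    let ?ysm = "\<lambda>i. ys (m + i)" and ?Zsm = "\<lambda>i. Zs (m + i)"
    have lowx: "xsE ?sx ys Zs k = xsE \<sigma>x ys Zs k" and lown: "nsE ?sn ys Zs k = nsE \<sigma>n ys Zs k" if "k < m" for k
      using noex[of k "Suc k"] Eb that unfolding xsE_def nsE_def m_def by auto
    have hx: "xsE ?sx ys Zs (m + i) = xsE (\<tau>x q) ?ysm ?Zsm i"
     and hn: "nsE ?sn ys Zs (m + i) = nsE (\<tau>n q) ?ysm ?Zsm i" for i
    proof -
      have y: "drop (Suc e) (map ys [0..<m + i]) = map ?ysm [0..<i]"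
        using drop_map_upt[of "Suc e" "m + i" ys] unfolding m_def by simp
      have z: "drop (Suc e) (map Zs [0..<Suc (m + i)]) = map ?Zsm [0..<Suc i]"
        using drop_map_upt[of "Suc e" "Suc (m + i)" Zs] unfolding m_def by simp
      have lt: "e < m + i" unfolding m_def by simp
      have le: "m + i \<le> Suc (m + i)" by simp
      have qq: "v @ map ?w [0..<2 * Suc e] = q" unfolding q_def m_def ..
      note Y = yex[OF le lt Ee Eb, unfolded y z qq]
      show "xsE ?sx ys Zs (m + i) = xsE (\<tau>x q) ?ysm ?Zsm i"
        unfolding xsE_def using Y by blast
      show "nsE ?sn ys Zs (m + i) = nsE (\<tau>n q) ?ysm ?Zsm i"
        unfolding nsE_def using Y by blast
    qed
    have wlow: "?w' j = ?w j" if "j < 2 * m" for j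
    proof (cases "even j")
      case True
      then obtain k where k: "j = 2 * k" by (rule evenE)
      then have "k < m" using that by simp
      then show ?thesis using lowx[of k] k unfolding wE_def by simp
    next
      case False
      then obtain k where k: "j = Suc (2 * k)" by (metis oddE Suc_eq_plus1)
      then show ?thesis unfolding wE_def by simp
    qed
    have hq: "v @ map ?w' [0..<2 * m] = q" unfolding q_def using wlow by simp
    note SC = shift_corr[of ?sx ys Zs m "\<tau>x q" ?sn "\<tau>n q", OF hx hn hq]
    have posl: "v @ map ?w' [0..<j] = v @ map ?w [0..<j]" if "j \<le> 2 * m" for j
      using wlow that by simp
    have low1: "IIokE S W v \<sigma>x \<sigma>n ys Zs j" if "IIokE T W v ?sx ?sn ys Zs j" "j \<le> e" for j
    proof (cases j)
      case 0 then show ?thesis using that unfolding IIokE_def by simp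
    next
      case (Suc j')
      have "j' < e" using Suc that(2) by simp
      then have "\<not> E j'" using Eb by blast
      then have "v @ map ?w [0..<2 * j] \<in> S" unfolding E_def Suc by simp
      moreover have "nsE ?sn ys Zs j' = nsE \<sigma>n ys Zs j'" using lown \<open>j' < e\<close> unfolding m_def by simp
      ultimately show ?thesis using that(1) unfolding IIokE_def Suc by simp
    qed
    have low2: "IokE T v ?sx ys Zs k" if "IokE S v \<sigma>x ys Zs k" "k \<le> e" for k
    proof -
      have "2 * k + 1 \<le> 2 * m" using that(2) unfolding m_def by simp
      then have eq: "v @ map ?w' [0..<2 * k + 1] = v @ map ?w [0..<2 * k + 1]" by (rule posl)
      have km: "k < m" using that(2) unfolding m_def by simp
      show ?thesis using that(1) ST unfolding IokE_def eq lowx[OF km] by blast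
    qed
    have tau: "I_strategy_in T W q A (\<tau>x q) (\<tau>n q)" if "IIokE T W v ?sx ?sn ys Zs m"
    proof (rule \<tau>)
      have "v @ map ?w' [0..<2 * m] \<in> T" using that unfolding IIokE_def m_def by simp
      then show "q \<in> T" using hq by simp
      show "ext v q" unfolding q_def ext_def by blast
      show "q \<notin> S" using Ee unfolding E_def q_def m_def .
      show "even (length q)" unfolding q_def using ev by simp
    qed
    have evq: "even (length q)" unfolding q_def using ev by simp
    have part1: "IokE T v ?sx ys Zs k" if all: "\<forall>j\<le>k. IIokE T W v ?sx ?sn ys Zs j" for k
    proof (cases "k \<le> e")
      case True
      have "\<forall>j\<le>k. IIokE S W v \<sigma>x \<sigma>n ys Zs j" using all low1 True by simp
      then have "IokE S v \<sigma>x ys Zs k" using S by blast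
      then show ?thesis using low2 True by blast
    next
      case False
      then obtain i where i: "k = m + i" unfolding m_def by (metis less_eqE not_less_eq_eq)
      have "IIokE T W v ?sx ?sn ys Zs m" using all i by simp
      note TS = tau[OF this, unfolded strat_even[OF evq], rule_format, of ?ysm ?Zsm]
      have "\<forall>j\<le>i. IIokE T W q (\<tau>x q) (\<tau>n q) ?ysm ?Zsm j" using all i SC(2) by simp
      then have "IokE T q (\<tau>x q) ?ysm ?Zsm i" using TS by blast
      then show ?thesis using SC(3) i by simp
    qed
    have part2: "outcome v ?w' \<in> A" if all: "\<forall>k. IIokE T W v ?sx ?sn ys Zs k"
    proof -
      note TS = tau[OF all[rule_format, of m], unfolded strat_even[OF evq], rule_format, of ?ysm ?Zsm]
      have "\<forall>j. IIokE T W q (\<tau>x q) (\<tau>n q) ?ysm ?Zsm j" using all SC(2) by simp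
      then have "outcome q (wE (\<tau>x q) ?ysm ?Zsm) \<in> A" using TS by blast
      then show ?thesis using SC(4) by simp
    qed
    show ?thesis using part1 part2 by blast
  qed
qed


lemma qs_restrict:
  assumes qs: "qs T W A p P" and q: "q \<in> P"
  shows "qs T W A q {r \<in> P. ext q r}"
proof (rule qsI)
  show "q \<in> {r \<in> P. ext q r}" using q ext_refl by simp
  show "r \<in> T \<and> ext q r" if "r \<in> {r \<in> P. ext q r}" for r using that qs_T[OF qs] by simp
  show "\<exists>x\<in>Z. x \<noteq> 0 \<and> r @ [x] \<in> {r \<in> P. ext q r}"
    if h: "r \<in> {r \<in> P. ext q r}" "even (length r)" "block_subspace Z" "Z \<subseteq> W" for r Z
  proof -
    have r: "r \<in> P" "ext q r" using h(1) by simp_all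
    obtain x where "x \<in> Z" "x \<noteq> 0" "r @ [x] \<in> P" using qs_even[OF qs r(1) h(2-4)] by blast
    moreover have "ext q (r @ [x])" using r(2) by (rule ext_snocI)
    ultimately show ?thesis by blast
  qed
  show "\<exists>n. \<forall>y\<in>tail W n. r @ [y] \<in> T \<longrightarrow> r @ [y] \<in> {r \<in> P. ext q r}"
    if h: "r \<in> {r \<in> P. ext q r}" "odd (length r)" for r
  proof -
    have r: "r \<in> P" "ext q r" using h(1) by simp_all
    obtain n where n: "\<forall>y\<in>tail W n. r @ [y] \<in> T \<longrightarrow> r @ [y] \<in> P" using qs_odd[OF qs r(1) h(2)] by blast
    have "ext q (r @ [y])" for y using r(2) by (rule ext_snocI)
    then show ?thesis using n by blast
  qed
  show "s \<in> A" if "\<forall>m\<ge>N. map s [0..<m] \<in> {r \<in> P. ext q r}" for s N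
  proof -
    have "\<forall>m\<ge>N. map s [0..<m] \<in> P" using that by blast
    then show ?thesis by (rule qs_win[OF qs])
  qed
qed

lemma posacc_strat:
  fixes v :: "'f::field vec list"
  assumes "posacc T W A v"
  shows "I_has_strategy T W v A"
proof -
  obtain P where qs: "qs T W A v P" using assms unfolding posacc_def by blast
  show ?thesis
  proof (cases "even (length v)")
    case True
    then show ?thesis using follow_even[OF qs True] unfolding I_has_strategy_def by blast
  next
    case False
    define n0 where "n0 = cn T W P v"
    define Py where "Py y = {r \<in> P. ext (v @ [y]) r}" for y
    have \<tau>: "I_strategy_in T W (v @ [y]) A (fxE (Py y) (v @ [y])) (fnE T W (Py y) (v @ [y]))"
      if "y \<in> tail W n0" "v @ [y] \<in> T" for y
    proof -
      have "v @ [y] \<in> P" using cn_prop[OF qs qs_root[OF qs] False] that unfolding n0_def by blast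
      then have "qs T W A (v @ [y]) (Py y)" unfolding Py_def by (rule qs_restrict[OF qs])
      moreover have "even (length (v @ [y]))" using False by simp
      ultimately show ?thesis by (rule follow_even)
    qed
    have "I_strategy_in T W v A (\<lambda>l Z. (\<lambda>y. fxE (Py y) (v @ [y])) (hd l) (tl l) Z)
            (\<lambda>l Z. if l = [] then n0 else (\<lambda>y. fnE T W (Py y) (v @ [y])) (hd l) (tl l) Z)"
      by (rule odd_build[where \<tau>x="\<lambda>y. fxE (Py y) (v @ [y])" and \<tau>n="\<lambda>y. fnE T W (Py y) (v @ [y])"])
         (use False \<tau> in auto)
    then show ?thesis unfolding I_has_strategy_def by blast
  qed
qed

lemma even_switch_has:
  fixes v :: "'f::field vec list"
  assumes ev: "even (length v)" and ST: "S \<subseteq> T" and st: "I_strategy_in S W v A \<sigma>x \<sigma>n"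
    and ex: "\<And>q. q \<in> T \<Longrightarrow> ext v q \<Longrightarrow> q \<notin> S \<Longrightarrow> I_has_strategy T W q A"
  shows "I_has_strategy T W v A"
proof -
  define \<tau> where "\<tau> q = (SOME p. I_strategy_in T W q A (fst p) (snd p))" for q
  have \<tau>: "I_strategy_in T W q A (fst (\<tau> q)) (snd (\<tau> q))" if "q \<in> T" "ext v q" "q \<notin> S" for q
  proof -
    have "\<exists>p. I_strategy_in T W q A (fst p) (snd p)" using ex[OF that] unfolding I_has_strategy_def by auto
    then show ?thesis unfolding \<tau>_def by (rule someI_ex)
  qed
  have "I_strategy_in T W v A (swx S \<sigma>x (\<lambda>q. fst (\<tau> q)) v) (swn S \<sigma>x \<sigma>n (\<lambda>q. snd (\<tau> q)) v)"
    by (rule even_switch[OF ev ST st]) (use \<tau> in auto)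
  then show ?thesis unfolding I_has_strategy_def by blast
qed

lemma strat_to_T:
  fixes v :: "'f::field vec list"
  assumes ST: "S \<subseteq> T" and st: "I_strategy_in S W v A \<sigma>x \<sigma>n"
    and ex: "\<And>q. q \<in> T \<Longrightarrow> ext v q \<Longrightarrow> q \<notin> S \<Longrightarrow> I_has_strategy T W q A"
  shows "I_has_strategy T W v A"
proof (cases "even (length v)")
  case True then show ?thesis using even_switch_has[OF True ST st ex] by blast
next
  case False
  define n0 where "n0 = \<sigma>n [] []"
  define \<tau> where "\<tau> y = (SOME p. I_strategy_in T W (v @ [y]) A (fst p) (snd p))" for y
  have hs: "I_has_strategy T W (v @ [y]) A" if "y \<in> tail W n0" "v @ [y] \<in> T" for y
  proof (cases "v @ [y] \<in> S")
    case True
    have st': "I_strategy_in S W (v @ [y]) A (\<lambda>l Z. \<sigma>x (y # l) Z) (\<lambda>l Z. \<sigma>n (y # l) Z)"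
      by (rule odd_decomp[OF False st]) (use that True n0_def in auto)
    have ev: "even (length (v @ [y]))" using False by simp
    show ?thesis
    proof (rule even_switch_has[OF ev ST st'])
      fix q assume h: "q \<in> T" "ext (v @ [y]) q" "q \<notin> S"
      have "ext v q" using h(2) by (rule ext_snocD)
      then show "I_has_strategy T W q A" using ex h(1,3) by blast
    qed
  next
    case False
    have "ext v (v @ [y])" by (rule ext_snoc)
    then show ?thesis using ex[OF that(2) _ False] by blast
  qed
  have \<tau>: "I_strategy_in T W (v @ [y]) A (fst (\<tau> y)) (snd (\<tau> y))" if "y \<in> tail W n0" "v @ [y] \<in> T" for y
  proof -
    have "\<exists>p. I_strategy_in T W (v @ [y]) A (fst p) (snd p)" using hs[OF that] unfolding I_has_strategy_def by auto
    then show ?thesis unfolding \<tau>_def by (rule someI_ex)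
  qed
  have "I_strategy_in T W v A (\<lambda>l Z. (\<lambda>y. fst (\<tau> y)) (hd l) (tl l) Z)
            (\<lambda>l Z. if l = [] then n0 else (\<lambda>y. snd (\<tau> y)) (hd l) (tl l) Z)"
    by (rule odd_build[where \<tau>x="\<lambda>y. fst (\<tau> y)" and \<tau>n="\<lambda>y. snd (\<tau> y)"]) (use False \<tau> in auto)
  then show ?thesis unfolding I_has_strategy_def by blast
qed


lemma countable_vec: "countable (UNIV :: ('f::{zero,countable}) vec set)"
proof -
  define N :: "'f vec \<Rightarrow> nat" where "N x = (if Poly_Mapping.keys x = {} then 0 else Suc (Max (Poly_Mapping.keys x)))" for x
  define f :: "'f vec \<Rightarrow> 'f list" where "f x = map (Poly_Mapping.lookup x) [0..<N x]" for x
  have big: "Poly_Mapping.lookup x k = 0" if "N x \<le> k" for x k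
  proof -
    have "k \<notin> Poly_Mapping.keys x"
    proof
      assume kx: "k \<in> Poly_Mapping.keys x"
      then have "k \<le> Max (Poly_Mapping.keys x)" by simp
      moreover have "Suc (Max (Poly_Mapping.keys x)) \<le> k" using that kx unfolding N_def by (auto split: if_splits)
      ultimately show False by simp
    qed
    then show ?thesis by (simp add: in_keys_iff)
  qed
  have "inj f"
  proof (rule injI)
    fix x y assume fe: "f x = f y"
    then have Nxy: "N x = N y" unfolding f_def by (metis length_map length_upt minus_nat.diff_0)
    show "x = y"
    proof (rule poly_mapping_eqI)
      fix k
      show "Poly_Mapping.lookup x k = Poly_Mapping.lookup y k"
      proof (cases "k < N x")
        case True
        then have "f x ! k = Poly_Mapping.lookup x k" "f y ! k = Poly_Mapping.lookup y k"
          unfolding f_def using Nxy by simp_all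
        then show ?thesis using fe by simp
      next
        case False
        then show ?thesis using big[of x k] big[of y k] Nxy by simp
      qed
    qed
  qed
  moreover have "countable (range f)" by (rule countable_subset[of _ UNIV]) simp_all
  ultimately show ?thesis using countable_image_inj_on by blast
qed

lemma countable_pos: "countable (UNIV :: ('f::{zero,countable}) vec list set)"
proof -
  have "countable (lists (UNIV :: 'f vec set))" using countable_vec by (rule countable_lists)
  then show ?thesis by simp
qed

lemma enum_pos: "\<exists>enum :: nat \<Rightarrow> ('f::{zero,countable}) vec list. surj enum"
  using range_from_nat_into[OF _ countable_pos] by blast

lemma subspace_into:
  fixes Y :: "'f::field vec set"
  assumes "block_subspace Y" "block_subspace W" "W \<subseteq> Z" "tail Z M \<subseteq> Y"
  shows "\<exists>W''. block_subspace W'' \<and> W'' \<subseteq> W \<and> W'' \<subseteq> Y"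
proof -
  obtain W'' where W'': "block_subspace W''" "W'' \<subseteq> W" "\<forall>x\<in>W''. x \<noteq> 0 \<longrightarrow> M < Min (Poly_Mapping.keys x)"
    using BS1[OF assms(2)] by blast
  have "W'' \<subseteq> Y"
  proof
    fix x assume x: "x \<in> W''"
    show "x \<in> Y"
    proof (cases "x = 0")
      case True then show ?thesis using block_subspace_zero[OF assms(1)] by simp
    next
      case False
      then have "x \<in> tail Z M" using x W'' assms(3) unfolding tail_def by auto
      then show ?thesis using assms(4) by blast
    qed
  qed
  then show ?thesis using W'' by blast
qed

theorem mainTheorem7:
  fixes A :: "(nat \<Rightarrow> ('f::{field,countable}) vec) set"
    and V :: "'f vec set" and v :: "'f vec list" and T :: "'f vec list set"
  assumes "block_subspace V"
    and "block_list v"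
    and "is_rule V v T"
    and "\<forall>W. block_subspace W \<and> W \<subseteq> V \<longrightarrow> \<not> I_has_strategy T W v A"
  shows "\<exists>X S. block_subspace X \<and> X \<subseteq> V \<and> is_rule X v S \<and> S \<subseteq> T \<and>
           body S \<inter> seq_interior A = {} \<and>
           (\<forall>W. block_subspace W \<and> W \<subseteq> X \<longrightarrow> \<not> I_has_strategy S W v A)"
proof -
  note bsV = assms(1) and rule = assms(3) and hyp = assms(4)
  obtain enum :: "nat \<Rightarrow> 'f vec list" where enum: "surj enum" using enum_pos by blast
  define D where "D p Y \<longleftrightarrow> posacc T Y A p \<or> (\<forall>W. block_subspace W \<and> W \<subseteq> Y \<longrightarrow> \<not> posacc T W A p)" for p Y
  have "\<exists>X. block_subspace X \<and> X \<subseteq> V \<and> (\<forall>i. D (enum i) X)"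
  proof (rule fusion[OF bsV])
    fix i and Y :: "'f vec set" assume Y: "block_subspace Y"
    show "\<exists>Y'. block_subspace Y' \<and> Y' \<subseteq> Y \<and> D (enum i) Y'"
    proof (cases "\<exists>W. block_subspace W \<and> W \<subseteq> Y \<and> posacc T W A (enum i)")
      case True then show ?thesis unfolding D_def by blast
    next
      case False then show ?thesis using Y unfolding D_def by blast
    qed
  next
    fix i and Y Z :: "'f vec set" and M
    assume DY: "D (enum i) Y" and Y: "block_subspace Y" and Z: "block_subspace Z" and ZY: "tail Z M \<subseteq> Y"
    show "D (enum i) Z"
    proof (cases "posacc T Y A (enum i)")
      case True then show ?thesis using posacc_tail[OF True Y ZY] unfolding D_def by blast
    next
      case False
      then have no: "\<forall>W. block_subspace W \<and> W \<subseteq> Y \<longrightarrow> \<not> posacc T W A (enum i)" using DY unfolding D_def by blast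
      have "\<not> posacc T W A (enum i)" if h: "block_subspace W" "W \<subseteq> Z" for W
      proof
        assume pa: "posacc T W A (enum i)"
        obtain W'' where "block_subspace W''" "W'' \<subseteq> W" "W'' \<subseteq> Y" using subspace_into[OF Y h ZY] by blast
        then show False using no posacc_mono[OF pa] by blast
      qed
      then show ?thesis unfolding D_def by blast
    qed
  qed
  then obtain X0 where bsX0: "block_subspace X0" and X0V: "X0 \<subseteq> V" and DX0: "\<forall>i. D (enum i) X0" by blast
  have dec: "posacc T X0 A p" if "block_subspace W" "W \<subseteq> X0" "posacc T W A p" for W p
  proof -
    obtain i where "p = enum i" using enum by (metis surj_def)
    then show ?thesis using DX0 that unfolding D_def by blast
  qed
  define B where "B p = {x. p @ [x] \<in> T \<and> posacc T X0 A (p @ [x])}" for p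
  define E where "E p Y \<longleftrightarrow> (\<exists>m. \<forall>z\<in>tail Y m. z \<notin> B p) \<or> (\<forall>Y'. block_subspace Y' \<and> Y' \<subseteq> Y \<longrightarrow> (\<exists>x\<in>Y'. x \<in> B p))" for p Y
  have "\<exists>X. block_subspace X \<and> X \<subseteq> X0 \<and> (\<forall>i. E (enum i) X)"
  proof (rule fusion[OF bsX0])
    fix i and Y :: "'f vec set" assume Y: "block_subspace Y"
    show "\<exists>Y'. block_subspace Y' \<and> Y' \<subseteq> Y \<and> E (enum i) Y'"
    proof (cases "\<exists>Y'. block_subspace Y' \<and> Y' \<subseteq> Y \<and> (\<forall>x\<in>Y'. x \<notin> B (enum i))")
      case True
      then obtain Y' where "block_subspace Y'" "Y' \<subseteq> Y" "\<forall>x\<in>Y'. x \<notin> B (enum i)" by blast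
      moreover have "\<forall>z\<in>tail Y' 0. z \<notin> B (enum i)" using calculation(3) unfolding tail_def by blast
      ultimately show ?thesis unfolding E_def by blast
    next
      case False then show ?thesis using Y unfolding E_def by blast
    qed
  next
    fix i and Y Z :: "'f vec set" and M
    assume EY: "E (enum i) Y" and Y: "block_subspace Y" and Z: "block_subspace Z" and ZY: "tail Z M \<subseteq> Y"
    show "E (enum i) Z"
    proof (cases "\<exists>m. \<forall>z\<in>tail Y m. z \<notin> B (enum i)")
      case True
      then obtain m where m: "\<forall>z\<in>tail Y m. z \<notin> B (enum i)" by blast
      have "tail Z (max m M) \<subseteq> tail Y m"
      proof
        fix z assume z: "z \<in> tail Z (max m M)"
        then have "z \<in> tail Z M" unfolding tail_def by auto
        then have "z \<in> Y" using ZY by blast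
        then show "z \<in> tail Y m" using z unfolding tail_def by auto
      qed
      then show ?thesis using m unfolding E_def by blast
    next
      case False
      then have all: "\<forall>Y'. block_subspace Y' \<and> Y' \<subseteq> Y \<longrightarrow> (\<exists>x\<in>Y'. x \<in> B (enum i))" using EY unfolding E_def by blast
      have "\<exists>x\<in>Y'. x \<in> B (enum i)" if h: "block_subspace Y'" "Y' \<subseteq> Z" for Y'
      proof -
        obtain W'' where "block_subspace W''" "W'' \<subseteq> Y'" "W'' \<subseteq> Y" using subspace_into[OF Y h ZY] by blast
        then show ?thesis using all by blast
      qed
      then show ?thesis unfolding E_def by blast
    qed
  qed
  then obtain X where bsX: "block_subspace X" and XX0: "X \<subseteq> X0" and EX: "\<forall>i. E (enum i) X" by blast
  have EXp: "E p X" for p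
  proof -
    obtain i where "p = enum i" using enum by (metis surj_def)
    then show ?thesis using EX by blast
  qed
  have XV: "X \<subseteq> V" using XX0 X0V by blast
  define S where "S = {p \<in> T. ext v p \<and> \<not> posacc T X0 A p}"
  have ST: "S \<subseteq> T" unfolding S_def by blast
  have vT: "v \<in> T" using rule unfolding is_rule_def by blast
  have vS: "v \<in> S"
  proof -
    have "\<not> posacc T X0 A v"
    proof
      assume "posacc T X0 A v"
      then have "I_has_strategy T X0 v A" by (rule posacc_strat)
      then show False using hyp bsX0 X0V by blast
    qed
    then show ?thesis unfolding S_def using vT ext_refl by blast
  qed
  have blT: "\<forall>y\<in>T. block_list y" using rule unfolding is_rule_def by blast
  have odd_ok: "\<exists>z\<in>Z. y @ [z] \<in> S" if y: "y \<in> S" "odd (length y)" and Z: "block_subspace Z" "Z \<subseteq> X" for y Z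
  proof (rule ccontr)
    assume "\<not> (\<exists>z\<in>Z. y @ [z] \<in> S)"
    then have nS: "\<forall>z\<in>Z. y @ [z] \<notin> S" by blast
    have yT: "y \<in> T" and ye: "ext v y" and yn: "\<not> posacc T X0 A y" using y(1) unfolding S_def by auto
    have "\<forall>z\<in>tail Z 0. y @ [z] \<in> T \<longrightarrow> posacc T Z A (y @ [z])"
    proof (intro ballI impI)
      fix z assume z: "z \<in> tail Z 0" "y @ [z] \<in> T"
      then have zZ: "z \<in> Z" unfolding tail_def by blast
      have "ext v (y @ [z])" using ye by (rule ext_snocI)
      then have "posacc T X0 A (y @ [z])" using nS zZ z(2) unfolding S_def by blast
      then show "posacc T Z A (y @ [z])" using posacc_mono Z(2) XX0 by blast
    qed
    then have "posacc T Z A y" using posacc_odd[OF y(2) yT] by blast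
    then have "posacc T X0 A y" using dec Z XX0 by blast
    then show False using yn by blast
  qed
  have even_ok: "\<exists>n. \<forall>z\<in>tail X n. y @ [z] \<in> S" if y: "y \<in> S" "even (length y)" for y
  proof -
    have yT: "y \<in> T" and ye: "ext v y" and yn: "\<not> posacc T X0 A y" using y(1) unfolding S_def by auto
    obtain nT where nT: "\<forall>z\<in>tail V nT. y @ [z] \<in> T" using rule yT y(2) unfolding is_rule_def by blast
    show ?thesis
    proof (cases "\<exists>m. \<forall>z\<in>tail X m. z \<notin> B y")
      case True
      then obtain m where m: "\<forall>z\<in>tail X m. z \<notin> B y" by blast
      have "y @ [z] \<in> S" if z: "z \<in> tail X (max m nT)" for z
      proof -
        have "z \<in> tail V nT" using z XV unfolding tail_def by auto
        then have zT: "y @ [z] \<in> T" using nT by blast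
        have "z \<in> tail X m" using z unfolding tail_def by auto
        then have "\<not> posacc T X0 A (y @ [z])" using m zT unfolding B_def by blast
        moreover have "ext v (y @ [z])" using ye by (rule ext_snocI)
        ultimately show ?thesis unfolding S_def using zT by blast
      qed
      then show ?thesis by blast
    next
      case False
      then have all: "\<forall>Y'. block_subspace Y' \<and> Y' \<subseteq> X \<longrightarrow> (\<exists>x\<in>Y'. x \<in> B y)" using EXp[of y] unfolding E_def by blast
      have "\<forall>Z. block_subspace Z \<and> Z \<subseteq> X \<longrightarrow> (\<exists>x\<in>Z. x \<noteq> 0 \<and> posacc T X A (y @ [x]))"
      proof (intro allI impI)
        fix Z assume Z: "block_subspace Z \<and> Z \<subseteq> X"
        then obtain x where x: "x \<in> Z" "y @ [x] \<in> T" "posacc T X0 A (y @ [x])" using all unfolding B_def by blast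
        have "block_list (y @ [x])" using blT x(2) by blast
        then have "x \<noteq> 0" unfolding block_list_def by simp
        moreover have "posacc T X A (y @ [x])" using posacc_mono[OF x(3) XX0] .
        ultimately show "\<exists>x\<in>Z. x \<noteq> 0 \<and> posacc T X A (y @ [x])" using x(1) by blast
      qed
      then have "posacc T X A y" using posacc_even[OF y(2) yT] by blast
      then have "posacc T X0 A y" using dec bsX XX0 by blast
      then show ?thesis using yn by blast
    qed
  qed
  have isr: "is_rule X v S"
    unfolding is_rule_def using vS ST blT odd_ok even_ok by blast
  have bod: "body S \<inter> seq_interior A = {}"
  proof (rule ccontr)
    assume "body S \<inter> seq_interior A \<noteq> {}"
    then obtain s where sb: "s \<in> body S" and si: "s \<in> seq_interior A" by blast
    obtain m where m: "\<forall>t. (\<forall>i<m. t i = s i) \<longrightarrow> t \<in> A" using si unfolding seq_interior_def by blast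
    have "infinite {m. map s [0..<Suc m] \<in> S}" using sb unfolding body_def by blast
    then have "\<exists>m'\<ge>m. m' \<in> {m. map s [0..<Suc m] \<in> S}" unfolding infinite_nat_iff_unbounded_le by blast
    then obtain m' where m': "m \<le> m'" "map s [0..<Suc m'] \<in> S" by blast
    let ?p = "map s [0..<Suc m']"
    have pT: "?p \<in> T" and pn: "\<not> posacc T X0 A ?p" using m'(2) unfolding S_def by auto
    have "\<forall>t. map t [0..<length ?p] = ?p \<longrightarrow> t \<in> A"
    proof (intro allI impI)
      fix t assume "map t [0..<length ?p] = ?p"
      then have "t i = s i" if "i < Suc m'" for i using that by (metis length_map length_upt minus_nat.diff_0 nth_map_upt add_0 map_eq_conv atLeastLessThan_iff le0 set_upt)
      then show "t \<in> A" using m m'(1) by simp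
    qed
    then have "posacc T X0 A ?p" using posacc_trivial[OF rule X0V pT] by blast
    then show False using pn by blast
  qed
  have nostrat: "\<not> I_has_strategy S W v A" if W: "block_subspace W" "W \<subseteq> X" for W
  proof
    assume "I_has_strategy S W v A"
    then obtain \<sigma>x \<sigma>n where st: "I_strategy_in S W v A \<sigma>x \<sigma>n" unfolding I_has_strategy_def by blast
    have "I_has_strategy T W v A"
    proof (rule strat_to_T[OF ST st])
      fix q assume q: "q \<in> T" "ext v q" "q \<notin> S"
      then have "posacc T X0 A q" unfolding S_def by blast
      then have "posacc T W A q" using posacc_mono W(2) XX0 by blast
      then show "I_has_strategy T W q A" by (rule posacc_strat)
    qed
    then show False using hyp W XV by blast
  qed
  show ?thesis using bsX XV isr ST bod nostrat by blast
qed

end
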